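(* The unique minimizer $u_{\min}$ of $J$ over $H^1_{\overline g}(\Omega)$ satisfies: $b(x,u_{\min}+w)v\in L^1(\Omega)$ for all $v\in\mathcal W$ and $$\int_\Omega\epsilon\nabla u_{\min}\cdot\nabla v\,dx+\int_\Omega b(x,u_{\min}+w)v\,dx=\int_\Omega\bm f\cdot\nabla v\,dx\quad\text{for all }v\in\mathcal W,$$ both for $\mathcal W=C_c^\infty(\Omega)$ and for $\mathcal W=H^1_0(\Omega)\cap L^\infty(\Omega)$.
   Context: Let $d\in\{2,3\}$, $\Omega\subset\mathbb R^d$ a bounded open set with Lipschitz boundary, $\Omega_m$ open with $\overline{\Omega_m}\subset\Omega$ and $\Gamma=\partial\Omega_m$ of class $C^1$, $\Omega_s:=\Omega\setminus\overline{\Omega_m}$, $\Omega_{ions}\subset\Omega_s$ open. Permittivity: $\epsilon=\epsilon_m>0$ constant on $\Omega_m$, $\epsilon=\epsilon_s$ on $\Omega_s$ with $\epsilon_s\in C^{0,1}(\overline{\Omega_s})$ bounded below by a positive constant. $g_\Omega\in C^{0,1}(\partial\Omega)$. Constants $e_0,k_B,T>0$; points $x_1,\dots,x_{N_m}\in\Omega_m$, reals $z_i$; for $j=1,\dots,N_{ions}$, $M_j>0$, nonzero reals $\xi_j$; $\overline M_j:=M_j\chi_{\Omega_{ions}}$. $b(x,t):=-\frac{4\pi e_0^2}{k_BT}\sum_j\overline M_j(x)\xi_je^{-\xi_jt}$, $B(x,t):=\frac{4\pi e_0^2}{k_BT}\sum_j\overline M_j(x)e^{-\xi_jt}$. $G(x)=-\frac{2e_0^2}{\epsilon_mk_BT}\sum_iz_i\ln|x-x_i|$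 ($d=2$), $G(x)=\frac{e_0^2}{\epsilon_mk_BT}\sum_i\frac{z_i}{|x-x_i|}$ ($d=3$). $u^H\in H^1(\Omega)$ equals $-G$ on $\Omega_s$, has trace $-G$ on $\Gamma$ from $\Omega_m$, and $\int_{\Omega_m}\nabla u^H\cdot\nabla v\,dx=0$ for all $v\in H^1_0(\Omega_m)$. $(w,\bm f,\overline g)$ is either $(G,\ \chi_{\Omega_s}(\epsilon_m-\epsilon_s)\nabla G,\ g_\Omega-G)$ (2-term splitting) or $(0,\ -\chi_{\Omega_m}\epsilon_m\nabla u^H+\chi_{\Omega_s}\epsilon_m\nabla G,\ g_\Omega)$ (3-term splitting). $H^1_{\overline g}(\Omega)$: $v\in H^1(\Omega)$ with trace $\overline g$. $J(v):=\frac12\int_\Omega\epsilon|\nabla v|^2+\int_\Omega B(x,v+w)-\int_\Omega\bm f\cdot\nabla v$ if $B(\cdot,v+w)\in L^1(\Omega)$, $+\infty$ otherwise; $J$ has a unique minimizer $u_{\min}$ over $H^1_{\overline g}(\Omega)$. *)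

theory Defs
  imports "HOL-Analysis.Analysis"
begin

definition cgrad :: "('a::euclidean_space \<Rightarrow> real) \<Rightarrow> 'a \<Rightarrow> 'a" where
  "cgrad f x = (\<Sum>b\<in>Basis. frechet_derivative f (at x) b *\<^sub>R b)"

fun Ck :: "nat \<Rightarrow> ('a::euclidean_space \<Rightarrow> real) set" where
  "Ck 0 = {f. continuous_on UNIV f}"
| "Ck (Suc n) = {f. (\<forall>x. f differentiable (at x)) \<and>
       (\<forall>b\<in>Basis. (\<lambda>x. frechet_derivative f (at x) b) \<in> Ck n)}"

definition smooth_fun :: "('a::euclidean_space \<Rightarrow> real) \<Rightarrow> bool" where
  "smooth_fun f \<longleftrightarrow> (\<forall>n. f \<in> Ck n)"

definition tsupport :: "('a::euclidean_space \<Rightarrow> real) \<Rightarrow> 'a set" where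
  "tsupport f = closure {x. f x \<noteq> 0}"

definition test_fun :: "'a::euclidean_space set \<Rightarrow> ('a \<Rightarrow> real) \<Rightarrow> bool" where
  "test_fun \<Omega> \<phi> \<longleftrightarrow> smooth_fun \<phi> \<and> compact (tsupport \<phi>) \<and> tsupport \<phi> \<subseteq> \<Omega>"

definition L2_on :: "'a::euclidean_space set \<Rightarrow> ('a \<Rightarrow> real) \<Rightarrow> bool" where
  "L2_on \<Omega> v \<longleftrightarrow> v \<in> borel_measurable lebesgue \<and> set_integrable lebesgue \<Omega> (\<lambda>x. (v x)\<^sup>2)"

definition L2v_on :: "'a::euclidean_space set \<Rightarrow> ('a \<Rightarrow> 'a) \<Rightarrow> bool" where
  "L2v_on \<Omega> F \<longleftrightarrow> F \<in> borel_measurable lebesgue \<and> set_integrable lebesgue \<Omega> (\<lambda>x. (norm (F x))\<^sup>2)"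

definition weak_grad :: "'a::euclidean_space set \<Rightarrow> ('a \<Rightarrow> real) \<Rightarrow> ('a \<Rightarrow> 'a) \<Rightarrow> bool" where
  "weak_grad \<Omega> v Dv \<longleftrightarrow>
     (\<forall>\<phi>. test_fun \<Omega> \<phi> \<longrightarrow> (\<forall>b\<in>Basis.
        (LINT x:\<Omega>|lebesgue. v x * frechet_derivative \<phi> (at x) b)
          = - (LINT x:\<Omega>|lebesgue. (Dv x \<bullet> b) * \<phi> x)))"

definition H1_grad :: "'a::euclidean_space set \<Rightarrow> ('a \<Rightarrow> real) \<Rightarrow> ('a \<Rightarrow> 'a) \<Rightarrow> bool" where
  "H1_grad \<Omega> v Dv \<longleftrightarrow> L2_on \<Omega> v \<and> L2v_on \<Omega> Dv \<and> weak_grad \<Omega> v Dv"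

definition H1 :: "'a::euclidean_space set \<Rightarrow> ('a \<Rightarrow> real) \<Rightarrow> bool" where
  "H1 \<Omega> v \<longleftrightarrow> (\<exists>Dv. H1_grad \<Omega> v Dv)"

definition H10_grad :: "'a::euclidean_space set \<Rightarrow> ('a \<Rightarrow> real) \<Rightarrow> ('a \<Rightarrow> 'a) \<Rightarrow> bool" where
  "H10_grad \<Omega> v Dv \<longleftrightarrow> H1_grad \<Omega> v Dv \<and>
     (\<exists>\<phi> :: nat \<Rightarrow> 'a \<Rightarrow> real. (\<forall>n. test_fun \<Omega> (\<phi> n)) \<and>
        (\<lambda>n. LINT x:\<Omega>|lebesgue. (v x - \<phi> n x)\<^sup>2 + (norm (Dv x - cgrad (\<phi> n) x))\<^sup>2)
          \<longlonglongrightarrow> 0)"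

definition H10 :: "'a::euclidean_space set \<Rightarrow> ('a \<Rightarrow> real) \<Rightarrow> bool" where
  "H10 \<Omega> v \<longleftrightarrow> (\<exists>Dv. H10_grad \<Omega> v Dv)"

text \<open>Trace: v (an H^1(Omega) function) has boundary trace g on the boundary of Omega iff
  v - h lies in H^1_0(Omega) for some h in H^1(Omega) continuous on the closure with h = g on
  the boundary (for Lipschitz domains, H^1_0 is the kernel of the trace operator and the trace of
  an H^1 function continuous up to the boundary is its boundary restriction).\<close>
definition has_trace :: "'a::euclidean_space set \<Rightarrow> ('a \<Rightarrow> real) \<Rightarrow> ('a \<Rightarrow> real) \<Rightarrow> bool" where
  "has_trace \<Omega> v g \<longleftrightarrow> H1 \<Omega> v \<and>
     (\<exists>h. H1 \<Omega> h \<and> continuous_on (closure \<Omega>) h \<and> (\<forall>x\<in>frontier \<Omega>. h x = g x) \<and>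
          H10 \<Omega> (\<lambda>x. v x - h x))"

definition Linf_on :: "'a::euclidean_space set \<Rightarrow> ('a \<Rightarrow> real) \<Rightarrow> bool" where
  "Linf_on \<Omega> v \<longleftrightarrow> v \<in> borel_measurable lebesgue \<and>
     (\<exists>C. AE x in lebesgue. x \<in> \<Omega> \<longrightarrow> \<bar>v x\<bar> \<le> C)"

definition lipschitz_boundary :: "'a::euclidean_space set \<Rightarrow> bool" where
  "lipschitz_boundary \<Omega> \<longleftrightarrow> (\<forall>x\<in>frontier \<Omega>. \<exists>r>0. \<exists>e. norm e = 1 \<and>
     (\<exists>\<gamma> :: 'a \<Rightarrow> real. (\<exists>L. L-lipschitz_on UNIV \<gamma>) \<and>
        \<Omega> \<inter> ball x r = {y \<in> ball x r. y \<bullet> e < \<gamma> (y - (y \<bullet> e) *\<^sub>R e)}))"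

definition C1_boundary :: "'a::euclidean_space set \<Rightarrow> bool" where
  "C1_boundary \<Omega> \<longleftrightarrow> (\<forall>x\<in>frontier \<Omega>. \<exists>r>0. \<exists>e. norm e = 1 \<and>
     (\<exists>\<gamma> :: 'a \<Rightarrow> real. (\<exists>D. (\<forall>z. (\<gamma> has_derivative (\<lambda>h. D z \<bullet> h)) (at z)) \<and> continuous_on UNIV D) \<and>
        \<Omega> \<inter> ball x r = {y \<in> ball x r. y \<bullet> e < \<gamma> (y - (y \<bullet> e) *\<^sub>R e)}))"

definition Bfun :: "real \<Rightarrow> real \<Rightarrow> real \<Rightarrow> nat \<Rightarrow> (nat \<Rightarrow> real) \<Rightarrow> (nat \<Rightarrow> real) \<Rightarrow> 'a set \<Rightarrow> 'a \<Rightarrow> real \<Rightarrow> real" where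
  "Bfun e0 kB T Nions M \<xi> Oions x t =
     4 * pi * e0\<^sup>2 / (kB * T) * (\<Sum>j<Nions. M j * indicator Oions x * exp (- \<xi> j * t))"

definition bfun :: "real \<Rightarrow> real \<Rightarrow> real \<Rightarrow> nat \<Rightarrow> (nat \<Rightarrow> real) \<Rightarrow> (nat \<Rightarrow> real) \<Rightarrow> 'a set \<Rightarrow> 'a \<Rightarrow> real \<Rightarrow> real" where
  "bfun e0 kB T Nions M \<xi> Oions x t =
     - 4 * pi * e0\<^sup>2 / (kB * T) * (\<Sum>j<Nions. M j * indicator Oions x * \<xi> j * exp (- \<xi> j * t))"

definition Gpot :: "real \<Rightarrow> real \<Rightarrow> real \<Rightarrow> real \<Rightarrow> nat \<Rightarrow> (nat \<Rightarrow> 'a::euclidean_space) \<Rightarrow> (nat \<Rightarrow> real) \<Rightarrow> 'a \<Rightarrow> real" where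
  "Gpot e0 kB T epsm Nm xs z x =
     (if DIM('a) = 2
      then - 2 * e0\<^sup>2 / (epsm * kB * T) * (\<Sum>i<Nm. z i * ln (norm (x - xs i)))
      else e0\<^sup>2 / (epsm * kB * T) * (\<Sum>i<Nm. z i / norm (x - xs i)))"

definition Jfun :: "'a::euclidean_space set \<Rightarrow> ('a \<Rightarrow> real) \<Rightarrow> ('a \<Rightarrow> real \<Rightarrow> real) \<Rightarrow> ('a \<Rightarrow> real)
    \<Rightarrow> ('a \<Rightarrow> 'a) \<Rightarrow> ('a \<Rightarrow> real) \<Rightarrow> ('a \<Rightarrow> 'a) \<Rightarrow> ereal" where
  "Jfun \<Omega> eps B w f v Dv =
     (if set_integrable lebesgue \<Omega> (\<lambda>x. B x (v x + w x))
      then ereal (1/2 * (LINT x:\<Omega>|lebesgue. eps x * (norm (Dv x))\<^sup>2)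
                  + (LINT x:\<Omega>|lebesgue. B x (v x + w x))
                  - (LINT x:\<Omega>|lebesgue. f x \<bullet> Dv x))
      else \<infinity>)"

end

theory Submission
  imports Defs
begin

lemma fd_add:
  fixes f g :: "'a::euclidean_space \<Rightarrow> real"
  assumes "f differentiable (at x)" "g differentiable (at x)"
  shows "frechet_derivative (\<lambda>x. f x + c * g x) (at x) = (\<lambda>h. frechet_derivative f (at x) h + c * frechet_derivative g (at x) h)"
proof -
  have "((\<lambda>x. f x + c * g x) has_derivative (\<lambda>h. frechet_derivative f (at x) h + c * frechet_derivative g (at x) h)) (at x)"
  proof (rule has_derivative_add)
    show "(f has_derivative frechet_derivative f (at x)) (at x)"
      using assms(1) frechet_derivative_works by blast
    have "(g has_derivative frechet_derivative g (at x)) (at x)"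
      using assms(2) frechet_derivative_works by blast
    then show "((\<lambda>x. c * g x) has_derivative (\<lambda>h. c * frechet_derivative g (at x) h)) (at x)"
      by (auto intro!: derivative_eq_intros)
  qed
  then show ?thesis by (rule frechet_derivative_at[symmetric])
qed

lemma Ck_lin: "f \<in> Ck n \<Longrightarrow> g \<in> Ck n \<Longrightarrow> (\<lambda>x. f x + c * g x) \<in> Ck n"
proof (induction n arbitrary: f g)
  case 0
  then show ?case by (auto intro!: continuous_intros)
next
  case (Suc n)
  have d: "\<forall>x. f differentiable (at x)" "\<forall>x. g differentiable (at x)" using Suc.prems by auto
  have "(\<lambda>x. frechet_derivative (\<lambda>x. f x + c * g x) (at x) b) \<in> Ck n" if "b \<in> Basis" for b
  proof -
    have "(\<lambda>x. frechet_derivative f (at x) b + c * frechet_derivative g (at x) b) \<in> Ck n"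
      using Suc.IH Suc.prems that by auto
    moreover have "(\<lambda>x. frechet_derivative (\<lambda>x. f x + c * g x) (at x) b) = (\<lambda>x. frechet_derivative f (at x) b + c * frechet_derivative g (at x) b)"
      by (rule ext) (simp add: fd_add d)
    ultimately show ?thesis by simp
  qed
  moreover have "\<forall>x. (\<lambda>x. f x + c * g x) differentiable (at x)"
    using d by (auto intro!: derivative_intros)
  ultimately show ?case by simp
qed

lemma Ck_zero: "(\<lambda>x. 0) \<in> Ck n"
  by (induction n) auto

lemma tsupport_lin: "tsupport (\<lambda>x. f x + c * g x) \<subseteq> tsupport f \<union> tsupport g"
proof -
  have "{x. f x + c * g x \<noteq> 0} \<subseteq> {x. f x \<noteq> 0} \<union> {x. g x \<noteq> 0}" by auto
  then show ?thesis unfolding tsupport_def using closure_mono closure_Un by blast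
qed

lemma test_fun_lin:
  assumes "test_fun \<Omega> f" "test_fun \<Omega> g"
  shows "test_fun \<Omega> (\<lambda>x. f x + c * g x)"
proof -
  have "compact (tsupport f \<union> tsupport g)" using assms unfolding test_fun_def by auto
  moreover have "closed (tsupport (\<lambda>x. f x + c * g x))" unfolding tsupport_def by simp
  ultimately have "compact (tsupport (\<lambda>x. f x + c * g x))"
    using tsupport_lin[of f c g] compact_Int_closed[of "tsupport f \<union> tsupport g"]
    by (metis Int_absorb1)
  moreover have "smooth_fun (\<lambda>x. f x + c * g x)"
    using assms Ck_lin unfolding test_fun_def smooth_fun_def by blast
  moreover have "tsupport (\<lambda>x. f x + c * g x) \<subseteq> \<Omega>"
    using assms tsupport_lin[of f c g] unfolding test_fun_def by auto
  ultimately show ?thesis unfolding test_fun_def by auto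
qed

lemma test_fun_zero: "test_fun \<Omega> (\<lambda>x. 0)"
  unfolding test_fun_def smooth_fun_def tsupport_def by (auto simp: Ck_zero)

lemma cgrad_zero: "cgrad (\<lambda>x. 0) x = 0"
  unfolding cgrad_def by simp

lemma test_diff: assumes "test_fun \<Omega> f" shows "f differentiable (at x)"
proof -
  have "f \<in> Ck (Suc 0)" using assms unfolding test_fun_def smooth_fun_def by blast
  then show ?thesis by simp
qed

lemma cgrad_lin:
  assumes "test_fun \<Omega> f" "test_fun \<Omega> g"
  shows "cgrad (\<lambda>x. f x + c * g x) x = cgrad f x + c *\<^sub>R cgrad g x"
  unfolding cgrad_def using fd_add[OF test_diff[OF assms(1)] test_diff[OF assms(2)]]
  by (simp add: scaleR_add_left sum.distrib scaleR_sum_right)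

lemma test_Ck1:
  assumes "test_fun \<Omega> f"
  shows "continuous_on UNIV f" "\<And>b. b \<in> Basis \<Longrightarrow> continuous_on UNIV (\<lambda>x. frechet_derivative f (at x) b)"
proof -
  have "f \<in> Ck 0" "f \<in> Ck (Suc 0)" using assms unfolding test_fun_def smooth_fun_def by blast+
  then show "continuous_on UNIV f" "\<And>b. b \<in> Basis \<Longrightarrow> continuous_on UNIV (\<lambda>x. frechet_derivative f (at x) b)"
    by auto
qed

lemma test_outside:
  assumes "test_fun \<Omega> f" "x \<notin> tsupport f"
  shows "f x = 0" "frechet_derivative f (at x) = (\<lambda>h. 0)"
proof -
  show "f x = 0" using contra_subsetD[OF closure_subset assms(2)[unfolded tsupport_def]] by simp
  have d0: "((\<lambda>x. 0) has_derivative (\<lambda>h. 0)) (at x)" by simp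
  have op: "open (- tsupport f)" unfolding tsupport_def by auto
  have xin: "x \<in> - tsupport f" using assms(2) by simp
  have eq: "0 = f y" if "y \<in> - tsupport f" for y
  proof -
    have "y \<notin> closure {x. f x \<noteq> 0}" using that unfolding tsupport_def by simp
    then have "y \<notin> {x. f x \<noteq> 0}" by (rule contra_subsetD[OF closure_subset])
    then show ?thesis by simp
  qed
  have "(f has_derivative (\<lambda>h. 0)) (at x)"
    by (rule has_derivative_transform_within_open[OF d0 op xin eq])
  then show "frechet_derivative f (at x) = (\<lambda>h. 0)" by (rule frechet_derivative_at[symmetric])
qed

lemma cgrad_inner_Basis:
  assumes "b \<in> Basis"
  shows "cgrad f x \<bullet> b = frechet_derivative f (at x) b"
proof -
  have "cgrad f x \<bullet> b = (\<Sum>b'\<in>Basis. frechet_derivative f (at x) b' * (b' \<bullet> b))"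
    unfolding cgrad_def by (simp add: inner_sum_left)
  also have "\<dots> = frechet_derivative f (at x) b"
    using assms by (simp add: inner_Basis if_distrib cong: if_cong)
  finally show ?thesis .
qed

lemma cgrad_fd:
  assumes "f differentiable (at x)"
  shows "frechet_derivative f (at x) h = cgrad f x \<bullet> h"
proof -
  have lin: "linear (frechet_derivative f (at x))" using assms by (rule linear_frechet_derivative)
  have "frechet_derivative f (at x) h = frechet_derivative f (at x) (\<Sum>b\<in>Basis. (h \<bullet> b) *\<^sub>R b)"
    by (simp add: euclidean_representation)
  also have "\<dots> = (\<Sum>b\<in>Basis. (h \<bullet> b) * frechet_derivative f (at x) b)"
    using lin by (simp add: linear_sum linear_scale)
  also have "\<dots> = cgrad f x \<bullet> h"
    unfolding cgrad_def inner_sum_left inner_scaleR_left by (rule sum.cong) (auto simp: inner_commute)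
  finally show ?thesis .
qed

lemma test_cgrad_cont:
  assumes "test_fun \<Omega> f"
  shows "continuous_on UNIV (cgrad f)"
  unfolding cgrad_def[abs_def] using test_Ck1(2)[OF assms]
  by (intro continuous_on_sum continuous_on_scaleR) auto

lemma test_cgrad_outside:
  assumes "test_fun \<Omega> f" "x \<notin> tsupport f"
  shows "cgrad f x = 0"
  unfolding cgrad_def using test_outside(2)[OF assms] by simp

lemma bounded_cont_supp:
  fixes f :: "'a::euclidean_space \<Rightarrow> 'b::real_normed_vector"
  assumes "continuous_on UNIV f" "compact K" "\<And>x. x \<notin> K \<Longrightarrow> f x = 0"
  shows "\<exists>C. \<forall>x. norm (f x) \<le> C"
proof -
  have "compact (f ` K)" using assms by (metis compact_continuous_image continuous_on_subset subset_UNIV)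
  then obtain C where C: "\<forall>y\<in>f ` K. norm y \<le> C" using compact_imp_bounded bounded_iff by metis
  show ?thesis
  proof (intro exI allI)
    fix x show "norm (f x) \<le> max C 0" using C assms(3)[of x] by (cases "x \<in> K") force+
  qed
qed

lemma test_bounded:
  assumes "test_fun \<Omega> f"
  shows "\<exists>C. \<forall>x. \<bar>f x\<bar> \<le> C" "\<exists>C. \<forall>x. norm (cgrad f x) \<le> C"
    "\<And>b. b \<in> Basis \<Longrightarrow> \<exists>C. \<forall>x. \<bar>frechet_derivative f (at x) b\<bar> \<le> C"
proof -
  have K: "compact (tsupport f)" using assms unfolding test_fun_def by auto
  show "\<exists>C. \<forall>x. \<bar>f x\<bar> \<le> C"
    using bounded_cont_supp[OF test_Ck1(1)[OF assms] K] test_outside(1)[OF assms] by auto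
  show "\<exists>C. \<forall>x. norm (cgrad f x) \<le> C"
    using bounded_cont_supp[OF test_cgrad_cont[OF assms] K] test_cgrad_outside[OF assms] by auto
  show "\<exists>C. \<forall>x. \<bar>frechet_derivative f (at x) b\<bar> \<le> C" if "b \<in> Basis" for b
    using bounded_cont_supp[OF test_Ck1(2)[OF assms that] K] test_outside(2)[OF assms] by auto
qed

lemma shift_meas1: fixes g :: "'a::euclidean_space \<Rightarrow> real"
  assumes gmeas: "g \<in> borel_measurable borel"
  shows "(\<lambda>x. g (x + c)) \<in> borel_measurable borel"
  by (rule measurable_compose[OF _ gmeas]) (intro borel_measurable_continuous_onI continuous_intros)

lemma shift_meas2: fixes g :: "'a::euclidean_space \<Rightarrow> real"
  assumes gmeas: "g \<in> borel_measurable borel" "(\<lambda>x. g (x + c)) \<in> borel_measurable borel"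
  shows "(\<lambda>x. (g (x + c) - g x) / d) \<in> borel_measurable borel"
  using gmeas by (intro borel_measurable_divide borel_measurable_diff) auto

lemma ibp_zero:
  fixes g :: "'a::euclidean_space \<Rightarrow> real" and D :: "'a \<Rightarrow> 'a \<Rightarrow> real"
  assumes der: "\<And>x. (g has_derivative D x) (at x)"
    and cont: "continuous_on UNIV (\<lambda>x. D x b)"
    and K: "compact K" and gK: "\<And>x. x \<notin> K \<Longrightarrow> g x = 0" and DK: "\<And>x. x \<notin> K \<Longrightarrow> D x b = 0"
    and b: "norm b = 1"
  shows "integral\<^sup>L lborel (\<lambda>x. D x b) = 0"
proof -
  obtain R where R0: "R > 0" "\<And>x. x \<in> K \<Longrightarrow> norm x \<le> R"
    using compact_imp_bounded[OF K] unfolding bounded_pos by auto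
  then have R: "K \<subseteq> cball 0 R" "R \<ge> 0" by auto
  have gcont: "continuous_on UNIV g"
    using der by (meson continuous_at_imp_continuous_on has_derivative_continuous)
  have gmeas[measurable]: "g \<in> borel_measurable borel" using gcont borel_measurable_continuous_onI by blast
  have Dmeas[measurable]: "(\<lambda>x. D x b) \<in> borel_measurable borel" using cont borel_measurable_continuous_onI by blast
  have "integrable lborel (\<lambda>x. indicator K x *\<^sub>R g x)"
    using K gcont by (intro borel_integrable_compact) (auto intro: continuous_on_subset)
  moreover have "(\<lambda>x. indicator K x *\<^sub>R g x) = g" using gK by (intro ext) (auto simp: indicator_def)
  ultimately have gint: "integrable lborel g" by simp
  obtain M where M: "\<And>x. \<bar>D x b\<bar> \<le> M"
    using bounded_cont_supp[OF cont K] DK by auto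
  have shift: "integral\<^sup>L lborel (\<lambda>x. g (x + c)) = integral\<^sup>L lborel g"
    and shifti: "integrable lborel (\<lambda>x. g (x + c))" for c
  proof -
    have "integral\<^sup>L lborel (\<lambda>x. g (c + x)) = integral\<^sup>L (distr lborel borel ((+) c)) g"
      by (rule integral_distr[symmetric]) auto
    then show "integral\<^sup>L lborel (\<lambda>x. g (x + c)) = integral\<^sup>L lborel g"
      by (simp add: lborel_distr_plus add.commute)
    have "integrable (distr lborel borel ((+) c)) g" using gint by (simp add: lborel_distr_plus)
    then have "integrable lborel (\<lambda>x. g (c + x))" by (subst (asm) integrable_distr_eq) auto
    then show "integrable lborel (\<lambda>x. g (x + c))" by (simp add: add.commute)
  qed
  define h :: "nat \<Rightarrow> real" where "h n = inverse (real (Suc n))" for n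
  have hpos: "h n > 0" "h n \<le> 1" for n unfolding h_def by (auto simp: field_simps)
  define s where "s n x = (g (x + h n *\<^sub>R b) - g x) / h n" for n x
  have s0: "integral\<^sup>L lborel (s n) = 0" for n
  proof -
    have "integral\<^sup>L lborel (s n) = (integral\<^sup>L lborel (\<lambda>x. g (x + h n *\<^sub>R b)) - integral\<^sup>L lborel g) / h n"
      unfolding s_def[abs_def] by (simp add: integral_diff shifti gint)
    then show ?thesis by (simp add: shift)
  qed
  have lineder: "((\<lambda>t. g (x + t *\<^sub>R b)) has_real_derivative D (x + t *\<^sub>R b) b) (at t)" for x t
  proof -
    have "((\<lambda>t. x + t *\<^sub>R b) has_derivative (\<lambda>t. t *\<^sub>R b)) (at t)"
      by (auto intro!: derivative_eq_intros)
    from has_derivative_compose[OF this der]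
    have "((\<lambda>t. g (x + t *\<^sub>R b)) has_derivative (\<lambda>s. D (x + t *\<^sub>R b) (s *\<^sub>R b))) (at t)" .
    moreover have "linear (D (x + t *\<^sub>R b))"
      using der has_derivative_linear by blast
    ultimately have "((\<lambda>t. g (x + t *\<^sub>R b)) has_derivative (\<lambda>s. s * D (x + t *\<^sub>R b) b)) (at t)"
      by (simp add: linear_scale)
    moreover have "(\<lambda>s. s * D (x + t *\<^sub>R b) b) = (*) (D (x + t *\<^sub>R b) b)" by (auto simp: mult.commute)
    ultimately show ?thesis by (simp add: has_field_derivative_def)
  qed
  have hlim: "filterlim h (at 0) sequentially"
    unfolding filterlim_at h_def using LIMSEQ_inverse_real_of_nat by auto
  have lim: "(\<lambda>n. s n x) \<longlonglongrightarrow> D x b" for x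
  proof -
    have "((\<lambda>t. (g (x + t *\<^sub>R b) - g x) / t) \<longlongrightarrow> D x b) (at 0)"
      using lineder[of x 0] unfolding DERIV_def by simp
    from filterlim_compose[OF this hlim] show ?thesis unfolding s_def by simp
  qed
  have bound: "norm (s n x) \<le> indicator (cball 0 (R + 1)) x *\<^sub>R M" for n x
  proof (cases "x \<in> cball 0 (R + 1)")
    case True
    obtain z where "0 < z" "z < h n"
      "g (x + h n *\<^sub>R b) - g (x + 0 *\<^sub>R b) = (h n - 0) * D (x + z *\<^sub>R b) b"
      using MVT2[of 0 "h n" "\<lambda>t. g (x + t *\<^sub>R b)" "\<lambda>t. D (x + t *\<^sub>R b) b"] hpos[of n] lineder
      by blast
    then have "s n x = D (x + z *\<^sub>R b) b" unfolding s_def using hpos[of n] by simp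
    then show ?thesis using True M by simp
  next
    case False
    then have nx: "norm x > R + 1" by simp
    have "norm (x + h n *\<^sub>R b) \<ge> norm x - norm (h n *\<^sub>R b)" using norm_triangle_sub[of x "x + h n *\<^sub>R b"] by simp
    moreover have "norm (h n *\<^sub>R b) \<le> 1" using hpos[of n] b by simp
    ultimately have "norm (x + h n *\<^sub>R b) > R" using nx by linarith
    then have "x + h n *\<^sub>R b \<notin> K" "x \<notin> K" using R nx by auto
    then show ?thesis using False gK unfolding s_def by simp
  qed
  have wint: "integrable lborel (\<lambda>x. indicator (cball 0 (R + 1)) x *\<^sub>R M)"
    by (intro borel_integrable_compact) (auto intro: continuous_on_const)
  have "(\<lambda>n. integral\<^sup>L lborel (s n)) \<longlonglongrightarrow> integral\<^sup>L lborel (\<lambda>x. D x b)"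
  proof (rule integral_dominated_convergence[OF _ _ wint])
    show "(\<lambda>x. D x b) \<in> borel_measurable lborel" unfolding measurable_lborel2 by (rule Dmeas)
    show "s i \<in> borel_measurable lborel" for i
      unfolding s_def[abs_def] measurable_lborel2 using shift_meas2[OF gmeas shift_meas1[OF gmeas]] .
    show "AE x in lborel. (\<lambda>i. s i x) \<longlonglongrightarrow> D x b" by (intro AE_I2) (rule lim)
    show "AE x in lborel. norm (s i x) \<le> indicator (cball 0 (R + 1)) x *\<^sub>R M" for i
      by (intro AE_I2) (rule bound)
  qed
  moreover have "(\<lambda>n. integral\<^sup>L lborel (s n)) = (\<lambda>n. 0::real)" by (rule ext) (rule s0)
  ultimately have "(\<lambda>n. 0::real) \<longlonglongrightarrow> integral\<^sup>L lborel (\<lambda>x. D x b)" by (simp only:)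
  from LIMSEQ_unique[OF this tendsto_const] show ?thesis .
qed

lemma cont_meas_leb:
  fixes f :: "'a::euclidean_space \<Rightarrow> 'b::euclidean_space"
  assumes "continuous_on UNIV f"
  shows "f \<in> borel_measurable lebesgue" "f \<in> borel_measurable lborel"
proof -
  have "f \<in> borel_measurable borel" using assms by (rule borel_measurable_continuous_onI)
  then show l: "f \<in> borel_measurable lborel" unfolding measurable_lborel2 .
  show "f \<in> borel_measurable lebesgue" by (rule measurable_completion[OF l])
qed

lemma conv_set:
  fixes F :: "'a::euclidean_space \<Rightarrow> real"
  assumes meas: "F \<in> borel_measurable lborel" and van: "\<And>x. x \<notin> \<Omega> \<Longrightarrow> F x = 0"
  shows "(LINT x:\<Omega>|lebesgue. F x) = integral\<^sup>L lborel F"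
    "set_integrable lebesgue \<Omega> F \<longleftrightarrow> integrable lborel F"
proof -
  have e: "(\<lambda>x. indicator \<Omega> x *\<^sub>R F x) = F" using van by (intro ext) (auto simp: indicator_def)
  show "(LINT x:\<Omega>|lebesgue. F x) = integral\<^sup>L lborel F"
    unfolding set_lebesgue_integral_def e by (rule integral_completion[OF meas])
  show "set_integrable lebesgue \<Omega> F \<longleftrightarrow> integrable lborel F"
    unfolding set_integrable_def e by (rule integrable_completion[OF meas])
qed

lemma cont_supp_int:
  fixes F :: "'a::euclidean_space \<Rightarrow> real"
  assumes "continuous_on UNIV F" "compact K" "\<And>x. x \<notin> K \<Longrightarrow> F x = 0"
  shows "integrable lborel F"
proof -
  have "integrable lborel (\<lambda>x. indicator K x *\<^sub>R F x)"
    using assms by (intro borel_integrable_compact) (auto intro: continuous_on_subset)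
  moreover have "(\<lambda>x. indicator K x *\<^sub>R F x) = F" using assms(3) by (intro ext) (auto simp: indicator_def)
  ultimately show ?thesis by simp
qed

lemma test_weak_grad:
  assumes v: "test_fun \<Omega> v"
  shows "weak_grad \<Omega> v (cgrad v)"
  unfolding weak_grad_def
proof (intro allI impI ballI)
  fix \<phi> :: "'a \<Rightarrow> real" and b :: 'a
  assume \<phi>: "test_fun \<Omega> \<phi>" and b: "b \<in> Basis"
  define K where "K = tsupport \<phi>"
  have K: "compact K" "K \<subseteq> \<Omega>" using \<phi> unfolding K_def test_fun_def by auto
  define D where "D x = (\<lambda>h. v x * frechet_derivative \<phi> (at x) h + frechet_derivative v (at x) h * \<phi> x)" for x
  have der: "((\<lambda>x. v x * \<phi> x) has_derivative D x) (at x)" for x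
  proof -
    have "(v has_derivative frechet_derivative v (at x)) (at x)" "(\<phi> has_derivative frechet_derivative \<phi> (at x)) (at x)"
      using test_diff[OF v] test_diff[OF \<phi>] frechet_derivative_works by blast+
    from has_derivative_mult[OF this] show ?thesis unfolding D_def .
  qed
  have cv: "continuous_on UNIV v" "continuous_on UNIV \<phi>"
    "continuous_on UNIV (\<lambda>x. frechet_derivative v (at x) b)" "continuous_on UNIV (\<lambda>x. frechet_derivative \<phi> (at x) b)"
    using test_Ck1[OF v] test_Ck1[OF \<phi>] b by auto
  have c1: "continuous_on UNIV (\<lambda>x. v x * frechet_derivative \<phi> (at x) b)"
    and c2: "continuous_on UNIV (\<lambda>x. frechet_derivative v (at x) b * \<phi> x)"
    using cv by (auto intro!: continuous_intros)
  have out: "\<phi> x = 0" "frechet_derivative \<phi> (at x) = (\<lambda>h. 0)" if "x \<notin> K" for x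
    using test_outside[OF \<phi>] that unfolding K_def by auto
  have outO: "\<phi> x = 0" "frechet_derivative \<phi> (at x) = (\<lambda>h. 0)" if "x \<notin> \<Omega>" for x
    using out K(2) that by blast+
  have "integral\<^sup>L lborel (\<lambda>x. D x b) = 0"
  proof (rule ibp_zero[OF der _ K(1)])
    show "continuous_on UNIV (\<lambda>x. D x b)" unfolding D_def using c1 c2 by (intro continuous_on_add)
    show "v x * \<phi> x = 0" if "x \<notin> K" for x using out[OF that] by simp
    show "D x b = 0" if "x \<notin> K" for x using out[OF that] unfolding D_def by simp
    show "norm b = 1" using b by simp
  qed
  moreover have i1: "integrable lborel (\<lambda>x. v x * frechet_derivative \<phi> (at x) b)"
    by (rule cont_supp_int[OF c1 K(1)]) (use out in simp)
  moreover have i2: "integrable lborel (\<lambda>x. frechet_derivative v (at x) b * \<phi> x)"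
    by (rule cont_supp_int[OF c2 K(1)]) (use out in simp)
  ultimately have eq: "integral\<^sup>L lborel (\<lambda>x. v x * frechet_derivative \<phi> (at x) b)
      = - integral\<^sup>L lborel (\<lambda>x. frechet_derivative v (at x) b * \<phi> x)"
    unfolding D_def by (simp add: integral_add)
  have "(LINT x:\<Omega>|lebesgue. v x * frechet_derivative \<phi> (at x) b) = integral\<^sup>L lborel (\<lambda>x. v x * frechet_derivative \<phi> (at x) b)"
    by (rule conv_set(1)[OF cont_meas_leb(2)[OF c1]]) (simp add: outO)
  moreover have "(LINT x:\<Omega>|lebesgue. (cgrad v x \<bullet> b) * \<phi> x) = integral\<^sup>L lborel (\<lambda>x. frechet_derivative v (at x) b * \<phi> x)"
    unfolding cgrad_inner_Basis[OF b]
    by (rule conv_set(1)[OF cont_meas_leb(2)[OF c2]]) (simp add: outO)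
  ultimately show "(LINT x:\<Omega>|lebesgue. v x * frechet_derivative \<phi> (at x) b) = - (LINT x:\<Omega>|lebesgue. (cgrad v x \<bullet> b) * \<phi> x)"
    using eq by simp
qed

lemma test_H10:
  assumes v: "test_fun \<Omega> v"
  shows "H10_grad \<Omega> v (cgrad v)" "Linf_on \<Omega> v"
proof -
  have K: "compact (tsupport v)" "tsupport v \<subseteq> \<Omega>" using v unfolding test_fun_def by auto
  have cv: "continuous_on UNIV v" "continuous_on UNIV (cgrad v)"
    using test_Ck1[OF v] test_cgrad_cont[OF v] by auto
  have out: "v x = 0" "cgrad v x = 0" if "x \<notin> tsupport v" for x
    using test_outside[OF v that] test_cgrad_outside[OF v that] by auto
  have c1: "continuous_on UNIV (\<lambda>x. (v x)\<^sup>2)" and c2: "continuous_on UNIV (\<lambda>x. (norm (cgrad v x))\<^sup>2)"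
    using cv by (auto intro!: continuous_intros)
  have "set_integrable lebesgue \<Omega> (\<lambda>x. (v x)\<^sup>2)"
    using cont_supp_int[OF c1 K(1)] out K(2)
    by (subst conv_set(2)[OF cont_meas_leb(2)[OF c1]]) auto
  then have L2: "L2_on \<Omega> v" unfolding L2_on_def using cont_meas_leb(1)[OF cv(1)] by simp
  have "set_integrable lebesgue \<Omega> (\<lambda>x. (norm (cgrad v x))\<^sup>2)"
    using cont_supp_int[OF c2 K(1)] out K(2)
    by (subst conv_set(2)[OF cont_meas_leb(2)[OF c2]]) auto
  then have L2v: "L2v_on \<Omega> (cgrad v)" unfolding L2v_on_def using cont_meas_leb(1)[OF cv(2)] by simp
  have H1: "H1_grad \<Omega> v (cgrad v)" unfolding H1_grad_def using L2 L2v test_weak_grad[OF v] by simp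
  show "H10_grad \<Omega> v (cgrad v)" unfolding H10_grad_def
  proof (intro conjI exI[of _ "\<lambda>n. v"])
    show "H1_grad \<Omega> v (cgrad v)" by (rule H1)
    show "\<forall>n. test_fun \<Omega> v" using v by simp
    show "(\<lambda>n. LINT x:\<Omega>|lebesgue. (v x - v x)\<^sup>2 + (norm (cgrad v x - cgrad v x))\<^sup>2) \<longlonglongrightarrow> 0"
      by simp
  qed
  obtain C where C: "\<forall>x. \<bar>v x\<bar> \<le> C" using test_bounded(1)[OF v] by auto
  show "Linf_on \<Omega> v" unfolding Linf_on_def
    using cont_meas_leb(1)[OF cv(1)] C by (auto intro!: exI[of _ C])
qed

lemma open_leb: "open (\<Omega>::'a::euclidean_space set) \<Longrightarrow> \<Omega> \<in> sets lebesgue"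
proof -
  assume "open \<Omega>"
  then have "\<Omega> \<in> sets lborel" by (simp add: borel_open)
  then show ?thesis by (rule sets_completionI_sets)
qed

lemma si_const:
  fixes \<Omega> :: "'a::euclidean_space set"
  assumes "open \<Omega>" "bounded \<Omega>"
  shows "set_integrable lebesgue \<Omega> (\<lambda>x. c::real)"
proof -
  have "\<Omega> \<in> sets lborel" using assms by (simp add: borel_open)
  moreover have "emeasure lborel \<Omega> < \<infinity>" using assms by (intro emeasure_bounded_finite)
  ultimately have i: "integrable lborel (indicat_real \<Omega>)" by (rule integrable_real_indicator)
  have m: "indicat_real \<Omega> \<in> borel_measurable lborel" using \<open>\<Omega> \<in> sets lborel\<close> by simp
  have "integrable lebesgue (indicat_real \<Omega>)" using integrable_completion[OF m] i by simp
  then show ?thesis unfolding set_integrable_def by simp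
qed

lemma si_bound:
  fixes f g :: "'a::euclidean_space \<Rightarrow> real"
  assumes "set_integrable lebesgue \<Omega> f" "g \<in> borel_measurable lebesgue" "open \<Omega>"
    "\<And>x. x \<in> \<Omega> \<Longrightarrow> \<bar>g x\<bar> \<le> f x"
  shows "set_integrable lebesgue \<Omega> g"
proof (rule set_integrable_bound[OF assms(1)])
  have "\<Omega> \<in> sets lebesgue" using assms(3) by (rule open_leb)
  then show "set_borel_measurable lebesgue \<Omega> g"
    unfolding set_borel_measurable_def using assms(2) by measurable
  show "AE x in lebesgue. x \<in> \<Omega> \<longrightarrow> norm (g x) \<le> norm (f x)"
    using assms(4) by (intro AE_I2) force
qed

lemma abs_prod_le: "\<bar>a * b\<bar> \<le> a\<^sup>2 + b\<^sup>2" for a b :: real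
proof -
  have "0 \<le> (\<bar>a\<bar> - \<bar>b\<bar>)\<^sup>2" by simp
  then have "2 * (\<bar>a\<bar> * \<bar>b\<bar>) \<le> \<bar>a\<bar>\<^sup>2 + \<bar>b\<bar>\<^sup>2" by (simp add: power2_diff)
  moreover have "0 \<le> \<bar>a\<bar> * \<bar>b\<bar>" by simp
  ultimately show ?thesis unfolding abs_mult power2_abs by linarith
qed

lemma L2_meas: "L2_on \<Omega> u \<Longrightarrow> u \<in> borel_measurable lebesgue"
  unfolding L2_on_def by simp
lemma L2v_meas: "L2v_on \<Omega> u \<Longrightarrow> u \<in> borel_measurable lebesgue"
  unfolding L2v_on_def by simp

lemma L2_L1:
  fixes \<Omega> :: "'a::euclidean_space set"
  assumes "open \<Omega>" "bounded \<Omega>" "L2_on \<Omega> u"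
  shows "set_integrable lebesgue \<Omega> u"
proof (rule si_bound[OF _ L2_meas[OF assms(3)] assms(1)])
  show "set_integrable lebesgue \<Omega> (\<lambda>x. 1 + (u x)\<^sup>2)"
    using si_const[OF assms(1,2)] assms(3) unfolding L2_on_def by (intro set_integral_add) auto
  show "\<bar>u x\<bar> \<le> 1 + (u x)\<^sup>2" for x
  proof (cases "\<bar>u x\<bar> \<le> 1")
    case False
    have "1 * \<bar>u x\<bar> \<le> \<bar>u x\<bar> * \<bar>u x\<bar>" by (rule mult_right_mono) (use False in auto)
    then show ?thesis by (simp add: power2_eq_square)
  next
    case True
    then show ?thesis using zero_le_power2[of "u x"] by linarith
  qed
qed

lemma L2_mult_bdd:
  fixes \<Omega> :: "'a::euclidean_space set"
  assumes "open \<Omega>" "bounded \<Omega>" "L2_on \<Omega> u" "c \<in> borel_measurable lebesgue" "\<And>x. x \<in> \<Omega> \<Longrightarrow> \<bar>c x\<bar> \<le> C"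
  shows "set_integrable lebesgue \<Omega> (\<lambda>x. u x * c x)"
proof (rule si_bound[OF _ _ assms(1)])
  show "set_integrable lebesgue \<Omega> (\<lambda>x. C * \<bar>u x\<bar>)"
    using L2_L1[OF assms(1-3)] by (intro set_integrable_mult_right set_integrable_abs)
  show "(\<lambda>x. u x * c x) \<in> borel_measurable lebesgue" using L2_meas[OF assms(3)] assms(4) by measurable
  show "\<bar>u x * c x\<bar> \<le> C * \<bar>u x\<bar>" if "x \<in> \<Omega>" for x
  proof -
    have "\<bar>c x\<bar> * \<bar>u x\<bar> \<le> C * \<bar>u x\<bar>" by (rule mult_right_mono) (use assms(5)[OF that] in auto)
    then show ?thesis by (simp add: abs_mult mult.commute)
  qed
qed

lemma L2_prod:
  fixes \<Omega> :: "'a::euclidean_space set"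
  assumes "open \<Omega>" "L2_on \<Omega> u" "L2_on \<Omega> v"
  shows "set_integrable lebesgue \<Omega> (\<lambda>x. u x * v x)"
proof (rule si_bound[OF _ _ assms(1)])
  show "set_integrable lebesgue \<Omega> (\<lambda>x. (u x)\<^sup>2 + (v x)\<^sup>2)"
    using assms unfolding L2_on_def by (intro set_integral_add) auto
  show "(\<lambda>x. u x * v x) \<in> borel_measurable lebesgue" using L2_meas[OF assms(2)] L2_meas[OF assms(3)] by measurable
  show "\<bar>u x * v x\<bar> \<le> (u x)\<^sup>2 + (v x)\<^sup>2" for x
    by (rule abs_prod_le)
qed

lemma L2v_prod:
  fixes \<Omega> :: "'a::euclidean_space set"
  assumes "open \<Omega>" "L2v_on \<Omega> F" "L2v_on \<Omega> G" "e \<in> borel_measurable lebesgue" "\<And>x. x \<in> \<Omega> \<Longrightarrow> \<bar>e x\<bar> \<le> C"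
  shows "set_integrable lebesgue \<Omega> (\<lambda>x. e x * (F x \<bullet> G x))"
proof (rule si_bound[OF _ _ assms(1)])
  show "set_integrable lebesgue \<Omega> (\<lambda>x. C * ((norm (F x))\<^sup>2 + (norm (G x))\<^sup>2))"
    using assms unfolding L2v_on_def by (intro set_integrable_mult_right set_integral_add) auto
  show "(\<lambda>x. e x * (F x \<bullet> G x)) \<in> borel_measurable lebesgue" using L2v_meas[OF assms(2)] L2v_meas[OF assms(3)] assms(4) by measurable
  show "\<bar>e x * (F x \<bullet> G x)\<bar> \<le> C * ((norm (F x))\<^sup>2 + (norm (G x))\<^sup>2)" if "x \<in> \<Omega>" for x
  proof -
    have "\<bar>F x \<bullet> G x\<bar> \<le> norm (F x) * norm (G x)" by (rule Cauchy_Schwarz_ineq2)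
    also have "\<dots> \<le> (norm (F x))\<^sup>2 + (norm (G x))\<^sup>2" using abs_prod_le[of "norm (F x)" "norm (G x)"] by simp
    finally have "\<bar>F x \<bullet> G x\<bar> \<le> (norm (F x))\<^sup>2 + (norm (G x))\<^sup>2" .
    then show ?thesis using assms(5)[OF that]
      by (simp add: abs_mult) (meson abs_ge_zero mult_mono order_trans abs_ge_self)
  qed
qed

lemma L2_lin:
  fixes \<Omega> :: "'a::euclidean_space set"
  assumes "open \<Omega>" "L2_on \<Omega> u" "L2_on \<Omega> v"
  shows "L2_on \<Omega> (\<lambda>x. u x + t * v x)"
proof -
  have "set_integrable lebesgue \<Omega> (\<lambda>x. (u x + t * v x)\<^sup>2)"
  proof (rule si_bound[OF _ _ assms(1)])
    show "set_integrable lebesgue \<Omega> (\<lambda>x. 2 * (u x)\<^sup>2 + (2 * t\<^sup>2) * (v x)\<^sup>2)"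
      using assms unfolding L2_on_def by (intro set_integrable_mult_right set_integral_add) auto
    show "(\<lambda>x. (u x + t * v x)\<^sup>2) \<in> borel_measurable lebesgue" using L2_meas[OF assms(2)] L2_meas[OF assms(3)] by measurable
    show "\<bar>(u x + t * v x)\<^sup>2\<bar> \<le> 2 * (u x)\<^sup>2 + (2 * t\<^sup>2) * (v x)\<^sup>2" for x
    proof -
      have "0 \<le> (u x - t * v x)\<^sup>2" by simp
      moreover have "(u x + t * v x)\<^sup>2 = (u x)\<^sup>2 + 2 * (u x * (t * v x)) + (t * v x)\<^sup>2" by (simp add: power2_eq_square algebra_simps)
      moreover have "(u x - t * v x)\<^sup>2 = (u x)\<^sup>2 - 2 * (u x * (t * v x)) + (t * v x)\<^sup>2" by (simp add: power2_eq_square algebra_simps)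
      moreover have "(t * v x)\<^sup>2 = t\<^sup>2 * (v x)\<^sup>2" by (simp add: power_mult_distrib)
      moreover have "\<bar>(u x + t * v x)\<^sup>2\<bar> = (u x + t * v x)\<^sup>2" by simp
      ultimately show ?thesis by linarith
    qed
  qed
  moreover have "(\<lambda>x. u x + t * v x) \<in> borel_measurable lebesgue"
    using L2_meas[OF assms(2)] L2_meas[OF assms(3)] by measurable
  ultimately show ?thesis unfolding L2_on_def by blast
qed

lemma L2v_lin:
  fixes \<Omega> :: "'a::euclidean_space set"
  assumes "open \<Omega>" "L2v_on \<Omega> F" "L2v_on \<Omega> G"
  shows "L2v_on \<Omega> (\<lambda>x. F x + t *\<^sub>R G x)"
proof -
  have "set_integrable lebesgue \<Omega> (\<lambda>x. (norm (F x + t *\<^sub>R G x))\<^sup>2)"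
  proof (rule si_bound[OF _ _ assms(1)])
    show "set_integrable lebesgue \<Omega> (\<lambda>x. 2 * (norm (F x))\<^sup>2 + (2 * t\<^sup>2) * (norm (G x))\<^sup>2)"
      using assms unfolding L2v_on_def by (intro set_integrable_mult_right set_integral_add) auto
    show "(\<lambda>x. (norm (F x + t *\<^sub>R G x))\<^sup>2) \<in> borel_measurable lebesgue" using L2v_meas[OF assms(2)] L2v_meas[OF assms(3)] by measurable
    show "\<bar>(norm (F x + t *\<^sub>R G x))\<^sup>2\<bar> \<le> 2 * (norm (F x))\<^sup>2 + (2 * t\<^sup>2) * (norm (G x))\<^sup>2" for x
    proof -
      have "norm (F x + t *\<^sub>R G x) \<le> norm (F x) + \<bar>t\<bar> * norm (G x)"
        using norm_triangle_ineq[of "F x" "t *\<^sub>R G x"] by simp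
      then have "(norm (F x + t *\<^sub>R G x))\<^sup>2 \<le> (norm (F x) + \<bar>t\<bar> * norm (G x))\<^sup>2"
        by (intro power_mono) auto
      also have "\<dots> \<le> 2 * (norm (F x))\<^sup>2 + (2 * t\<^sup>2) * (norm (G x))\<^sup>2"
      proof -
        have "0 \<le> (norm (F x) - \<bar>t\<bar> * norm (G x))\<^sup>2" by simp
        moreover have "(norm (F x) + \<bar>t\<bar> * norm (G x))\<^sup>2 = (norm (F x))\<^sup>2 + 2 * (norm (F x) * (\<bar>t\<bar> * norm (G x))) + (\<bar>t\<bar> * norm (G x))\<^sup>2" by (simp add: power2_eq_square algebra_simps)
        moreover have "(norm (F x) - \<bar>t\<bar> * norm (G x))\<^sup>2 = (norm (F x))\<^sup>2 - 2 * (norm (F x) * (\<bar>t\<bar> * norm (G x))) + (\<bar>t\<bar> * norm (G x))\<^sup>2" by (simp add: power2_eq_square algebra_simps)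
        moreover have "(\<bar>t\<bar> * norm (G x))\<^sup>2 = t\<^sup>2 * (norm (G x))\<^sup>2" by (simp add: power_mult_distrib)
        ultimately show ?thesis by simp
      qed
      finally show ?thesis by simp
    qed
  qed
  moreover have "(\<lambda>x. F x + t *\<^sub>R G x) \<in> borel_measurable lebesgue"
    using L2v_meas[OF assms(2)] L2v_meas[OF assms(3)] by measurable
  ultimately show ?thesis unfolding L2v_on_def by blast
qed

lemma set_integral_nonneg_real:
  fixes f :: "'a \<Rightarrow> real"
  assumes "\<And>x. x \<in> A \<Longrightarrow> 0 \<le> f x"
  shows "0 \<le> (LINT x:A|M. f x)"
  unfolding set_lebesgue_integral_def
  by (rule integral_nonneg_AE) (use assms in \<open>auto simp: indicator_def\<close>)

lemma sq_lin: "(a + t * b)\<^sup>2 \<le> 2 * a\<^sup>2 + (2 * t\<^sup>2) * b\<^sup>2" for a b t :: real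
proof -
  have "0 \<le> (a - t * b)\<^sup>2" by simp
  moreover have "(a + t * b)\<^sup>2 = a\<^sup>2 + 2 * (a * (t * b)) + t\<^sup>2 * b\<^sup>2" by (simp add: power2_eq_square algebra_simps)
  moreover have "(a - t * b)\<^sup>2 = a\<^sup>2 - 2 * (a * (t * b)) + t\<^sup>2 * b\<^sup>2" by (simp add: power2_eq_square algebra_simps)
  ultimately show ?thesis by linarith
qed

lemma nsq_lin: "(norm (A + t *\<^sub>R B))\<^sup>2 \<le> 2 * (norm A)\<^sup>2 + (2 * t\<^sup>2) * (norm B)\<^sup>2"
  for A B :: "'a::real_normed_vector" and t :: real
proof -
  have "norm (A + t *\<^sub>R B) \<le> norm A + \<bar>t\<bar> * norm B"
    using norm_triangle_ineq[of A "t *\<^sub>R B"] by simp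
  then have "(norm (A + t *\<^sub>R B))\<^sup>2 \<le> (norm A + \<bar>t\<bar> * norm B)\<^sup>2" by (intro power_mono) auto
  also have "\<dots> \<le> 2 * (norm A)\<^sup>2 + (2 * \<bar>t\<bar>\<^sup>2) * (norm B)\<^sup>2" by (rule sq_lin)
  finally show ?thesis by simp
qed

lemma L2_diff:
  fixes \<Omega> :: "'a::euclidean_space set"
  assumes "open \<Omega>" "L2_on \<Omega> u" "L2_on \<Omega> v"
  shows "L2_on \<Omega> (\<lambda>x. u x - v x)"
  using L2_lin[OF assms, of "-1"] by simp

lemma L2v_diff:
  fixes \<Omega> :: "'a::euclidean_space set"
  assumes "open \<Omega>" "L2v_on \<Omega> u" "L2v_on \<Omega> v"
  shows "L2v_on \<Omega> (\<lambda>x. u x - v x)"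
  using L2v_lin[OF assms, of "-1"] by simp

lemma L2v_comp:
  fixes \<Omega> :: "'a::euclidean_space set"
  assumes "open \<Omega>" "L2v_on \<Omega> F" "b \<in> Basis"
  shows "L2_on \<Omega> (\<lambda>x. F x \<bullet> b)"
proof -
  have m: "(\<lambda>x. F x \<bullet> b) \<in> borel_measurable lebesgue" using L2v_meas[OF assms(2)] by measurable
  have "set_integrable lebesgue \<Omega> (\<lambda>x. (F x \<bullet> b)\<^sup>2)"
  proof (rule si_bound[OF _ _ assms(1)])
    show "set_integrable lebesgue \<Omega> (\<lambda>x. (norm (F x))\<^sup>2)" using assms(2) unfolding L2v_on_def by simp
    show "(\<lambda>x. (F x \<bullet> b)\<^sup>2) \<in> borel_measurable lebesgue" using m by measurable
    show "\<bar>(F x \<bullet> b)\<^sup>2\<bar> \<le> (norm (F x))\<^sup>2" for x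
    proof -
      have "\<bar>F x \<bullet> b\<bar> \<le> norm (F x)" using Basis_le_norm[OF assms(3)] by simp
      then have "(F x \<bullet> b)\<^sup>2 \<le> (norm (F x))\<^sup>2" by (metis abs_le_square_iff abs_norm_cancel)
      then show ?thesis by simp
    qed
  qed
  then show ?thesis using m unfolding L2_on_def by blast
qed

lemma test_L2:
  assumes "test_fun \<Omega> \<phi>"
  shows "L2_on \<Omega> \<phi>" "L2v_on \<Omega> (cgrad \<phi>)"
  using test_H10(1)[OF assms] unfolding H10_grad_def H1_grad_def by auto

lemma weak_grad_lin:
  fixes \<Omega> :: "'a::euclidean_space set"
  assumes o: "open \<Omega>" "bounded \<Omega>"
    and u: "L2_on \<Omega> u" "L2v_on \<Omega> Du" "weak_grad \<Omega> u Du"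
    and v: "L2_on \<Omega> v" "L2v_on \<Omega> Dv" "weak_grad \<Omega> v Dv"
  shows "weak_grad \<Omega> (\<lambda>x. u x + t * v x) (\<lambda>x. Du x + t *\<^sub>R Dv x)"
  unfolding weak_grad_def
proof (intro allI impI ballI)
  fix \<phi> :: "'a \<Rightarrow> real" and b :: 'a
  assume \<phi>: "test_fun \<Omega> \<phi>" and b: "b \<in> Basis"
  define c where "c x = frechet_derivative \<phi> (at x) b" for x
  have cm: "c \<in> borel_measurable lebesgue" unfolding c_def[abs_def]
    using test_Ck1(2)[OF \<phi> b] by (rule cont_meas_leb)
  obtain C where C: "\<forall>x. \<bar>c x\<bar> \<le> C" using test_bounded(3)[OF \<phi> b] unfolding c_def by auto
  have pm: "\<phi> \<in> borel_measurable lebesgue" using test_Ck1(1)[OF \<phi>] by (rule cont_meas_leb)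
  obtain P where P: "\<forall>x. \<bar>\<phi> x\<bar> \<le> P" using test_bounded(1)[OF \<phi>] by auto
  have iu: "set_integrable lebesgue \<Omega> (\<lambda>x. u x * c x)" by (rule L2_mult_bdd[OF o u(1) cm]) (use C in auto)
  have iv: "set_integrable lebesgue \<Omega> (\<lambda>x. v x * c x)" by (rule L2_mult_bdd[OF o v(1) cm]) (use C in auto)
  have iDu: "set_integrable lebesgue \<Omega> (\<lambda>x. (Du x \<bullet> b) * \<phi> x)"
    by (rule L2_mult_bdd[OF o L2v_comp[OF o(1) u(2) b] pm]) (use P in auto)
  have iDv: "set_integrable lebesgue \<Omega> (\<lambda>x. (Dv x \<bullet> b) * \<phi> x)"
    by (rule L2_mult_bdd[OF o L2v_comp[OF o(1) v(2) b] pm]) (use P in auto)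
  have eu: "(LINT x:\<Omega>|lebesgue. u x * c x) = - (LINT x:\<Omega>|lebesgue. (Du x \<bullet> b) * \<phi> x)"
    using u(3) \<phi> b unfolding weak_grad_def c_def by blast
  have ev: "(LINT x:\<Omega>|lebesgue. v x * c x) = - (LINT x:\<Omega>|lebesgue. (Dv x \<bullet> b) * \<phi> x)"
    using v(3) \<phi> b unfolding weak_grad_def c_def by blast
  have "(LINT x:\<Omega>|lebesgue. (u x + t * v x) * c x) = (LINT x:\<Omega>|lebesgue. u x * c x + t * (v x * c x))"
    by (simp add: algebra_simps)
  also have "\<dots> = (LINT x:\<Omega>|lebesgue. u x * c x) + t * (LINT x:\<Omega>|lebesgue. v x * c x)"
    using iu iv by (simp add: set_integral_add(2))
  also have "\<dots> = - ((LINT x:\<Omega>|lebesgue. (Du x \<bullet> b) * \<phi> x) + t * (LINT x:\<Omega>|lebesgue. (Dv x \<bullet> b) * \<phi> x))"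
    using eu ev by simp
  also have "(LINT x:\<Omega>|lebesgue. (Du x \<bullet> b) * \<phi> x) + t * (LINT x:\<Omega>|lebesgue. (Dv x \<bullet> b) * \<phi> x)
      = (LINT x:\<Omega>|lebesgue. (Du x \<bullet> b) * \<phi> x + t * ((Dv x \<bullet> b) * \<phi> x))"
    using iDu iDv by (simp add: set_integral_add(2))
  also have "\<dots> = (LINT x:\<Omega>|lebesgue. ((Du x + t *\<^sub>R Dv x) \<bullet> b) * \<phi> x)"
    by (simp add: algebra_simps inner_add_left)
  finally show "(LINT x:\<Omega>|lebesgue. (u x + t * v x) * frechet_derivative \<phi> (at x) b) =
      - (LINT x:\<Omega>|lebesgue. ((Du x + t *\<^sub>R Dv x) \<bullet> b) * \<phi> x)" unfolding c_def .
qed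

lemma H1_lin:
  fixes \<Omega> :: "'a::euclidean_space set"
  assumes o: "open \<Omega>" "bounded \<Omega>" and "H1_grad \<Omega> u Du" "H1_grad \<Omega> v Dv"
  shows "H1_grad \<Omega> (\<lambda>x. u x + t * v x) (\<lambda>x. Du x + t *\<^sub>R Dv x)"
  using assms L2_lin[OF o(1)] L2v_lin[OF o(1)] weak_grad_lin[OF o] unfolding H1_grad_def by blast

lemma H10_lin:
  fixes \<Omega> :: "'a::euclidean_space set"
  assumes o: "open \<Omega>" "bounded \<Omega>" and u: "H10_grad \<Omega> u Du" and v: "H10_grad \<Omega> v Dv"
  shows "H10_grad \<Omega> (\<lambda>x. u x + t * v x) (\<lambda>x. Du x + t *\<^sub>R Dv x)"
proof -
  obtain \<phi> where \<phi>: "\<forall>n. test_fun \<Omega> (\<phi> n)"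
    "(\<lambda>n. LINT x:\<Omega>|lebesgue. (u x - \<phi> n x)\<^sup>2 + (norm (Du x - cgrad (\<phi> n) x))\<^sup>2) \<longlonglongrightarrow> 0"
    using u unfolding H10_grad_def by blast
  obtain \<psi> where \<psi>: "\<forall>n. test_fun \<Omega> (\<psi> n)"
    "(\<lambda>n. LINT x:\<Omega>|lebesgue. (v x - \<psi> n x)\<^sup>2 + (norm (Dv x - cgrad (\<psi> n) x))\<^sup>2) \<longlonglongrightarrow> 0"
    using v unfolding H10_grad_def by blast
  have uH: "H1_grad \<Omega> u Du" and vH: "H1_grad \<Omega> v Dv" using u v unfolding H10_grad_def by auto
  define ch where "ch n x = \<phi> n x + t * \<psi> n x" for n x
  have ch: "test_fun \<Omega> (ch n)" for n unfolding ch_def[abs_def] using \<phi>(1) \<psi>(1) by (simp add: test_fun_lin)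
  have gch: "cgrad (ch n) x = cgrad (\<phi> n) x + t *\<^sub>R cgrad (\<psi> n) x" for n x
    unfolding ch_def[abs_def] by (rule cgrad_lin[OF \<phi>(1)[rule_format] \<psi>(1)[rule_format]])
  define A where "A n x = (u x - \<phi> n x)\<^sup>2 + (norm (Du x - cgrad (\<phi> n) x))\<^sup>2" for n x
  define B where "B n x = (v x - \<psi> n x)\<^sup>2 + (norm (Dv x - cgrad (\<psi> n) x))\<^sup>2" for n x
  define E where "E n x = ((u x + t * v x) - ch n x)\<^sup>2 + (norm ((Du x + t *\<^sub>R Dv x) - cgrad (ch n) x))\<^sup>2" for n x
  have intA: "set_integrable lebesgue \<Omega> (A n)" for n
  proof -
    have "L2_on \<Omega> (\<lambda>x. u x - \<phi> n x)" "L2v_on \<Omega> (\<lambda>x. Du x - cgrad (\<phi> n) x)"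
      using L2_diff[OF o(1)] L2v_diff[OF o(1)] uH test_L2[OF \<phi>(1)[rule_format, of n]] unfolding H1_grad_def by auto
    then show ?thesis unfolding A_def[abs_def] L2_on_def L2v_on_def by (intro set_integral_add) auto
  qed
  have intB: "set_integrable lebesgue \<Omega> (B n)" for n
  proof -
    have "L2_on \<Omega> (\<lambda>x. v x - \<psi> n x)" "L2v_on \<Omega> (\<lambda>x. Dv x - cgrad (\<psi> n) x)"
      using L2_diff[OF o(1)] L2v_diff[OF o(1)] vH test_L2[OF \<psi>(1)[rule_format, of n]] unfolding H1_grad_def by auto
    then show ?thesis unfolding B_def[abs_def] L2_on_def L2v_on_def by (intro set_integral_add) auto
  qed
  have H1: "H1_grad \<Omega> (\<lambda>x. u x + t * v x) (\<lambda>x. Du x + t *\<^sub>R Dv x)" by (rule H1_lin[OF o uH vH])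
  have intE: "set_integrable lebesgue \<Omega> (E n)" for n
  proof -
    have "L2_on \<Omega> (\<lambda>x. (u x + t * v x) - ch n x)" "L2v_on \<Omega> (\<lambda>x. (Du x + t *\<^sub>R Dv x) - cgrad (ch n) x)"
      using L2_diff[OF o(1)] L2v_diff[OF o(1)] H1 test_L2[OF ch] unfolding H1_grad_def by auto
    then show ?thesis unfolding E_def[abs_def] L2_on_def L2v_on_def by (intro set_integral_add) auto
  qed
  have Ebound: "E n x \<le> 2 * A n x + (2 * t\<^sup>2) * B n x" for n x
  proof -
    have "((u x + t * v x) - ch n x)\<^sup>2 = ((u x - \<phi> n x) + t * (v x - \<psi> n x))\<^sup>2"
      unfolding ch_def by (simp add: algebra_simps)
    also have "\<dots> \<le> 2 * (u x - \<phi> n x)\<^sup>2 + (2 * t\<^sup>2) * (v x - \<psi> n x)\<^sup>2" by (rule sq_lin)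
    finally have 1: "((u x + t * v x) - ch n x)\<^sup>2 \<le> 2 * (u x - \<phi> n x)\<^sup>2 + (2 * t\<^sup>2) * (v x - \<psi> n x)\<^sup>2" .
    have "(norm ((Du x + t *\<^sub>R Dv x) - cgrad (ch n) x))\<^sup>2 = (norm ((Du x - cgrad (\<phi> n) x) + t *\<^sub>R (Dv x - cgrad (\<psi> n) x)))\<^sup>2"
      unfolding gch by (simp add: algebra_simps)
    also have "\<dots> \<le> 2 * (norm (Du x - cgrad (\<phi> n) x))\<^sup>2 + (2 * t\<^sup>2) * (norm (Dv x - cgrad (\<psi> n) x))\<^sup>2" by (rule nsq_lin)
    finally have 2: "(norm ((Du x + t *\<^sub>R Dv x) - cgrad (ch n) x))\<^sup>2 \<le> 2 * (norm (Du x - cgrad (\<phi> n) x))\<^sup>2 + (2 * t\<^sup>2) * (norm (Dv x - cgrad (\<psi> n) x))\<^sup>2" .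
    show ?thesis using 1 2 unfolding E_def A_def B_def distrib_left by linarith
  qed
  have le: "(LINT x:\<Omega>|lebesgue. E n x) \<le> 2 * (LINT x:\<Omega>|lebesgue. A n x) + (2 * t\<^sup>2) * (LINT x:\<Omega>|lebesgue. B n x)" for n
  proof -
    have "(LINT x:\<Omega>|lebesgue. E n x) \<le> (LINT x:\<Omega>|lebesgue. 2 * A n x + (2 * t\<^sup>2) * B n x)"
      using intE intA intB Ebound by (intro set_integral_mono) auto
    also have "\<dots> = 2 * (LINT x:\<Omega>|lebesgue. A n x) + (2 * t\<^sup>2) * (LINT x:\<Omega>|lebesgue. B n x)"
      using intA intB by (simp add: set_integral_add(2))
    finally show ?thesis .
  qed
  have ge: "0 \<le> (LINT x:\<Omega>|lebesgue. E n x)" for n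
    unfolding E_def by (rule set_integral_nonneg_real) simp
  have "(\<lambda>n. 2 * (LINT x:\<Omega>|lebesgue. A n x) + (2 * t\<^sup>2) * (LINT x:\<Omega>|lebesgue. B n x)) \<longlonglongrightarrow> 2 * 0 + (2 * t\<^sup>2) * 0"
    using \<phi>(2) \<psi>(2) unfolding A_def B_def by (intro tendsto_intros)
  then have up: "(\<lambda>n. 2 * (LINT x:\<Omega>|lebesgue. A n x) + (2 * t\<^sup>2) * (LINT x:\<Omega>|lebesgue. B n x)) \<longlonglongrightarrow> 0"
    by simp
  have ev1: "eventually (\<lambda>n. 0 \<le> (LINT x:\<Omega>|lebesgue. E n x)) sequentially"
    using ge by (intro always_eventually allI)
  have ev2: "eventually (\<lambda>n. (LINT x:\<Omega>|lebesgue. E n x) \<le> 2 * (LINT x:\<Omega>|lebesgue. A n x) + (2 * t\<^sup>2) * (LINT x:\<Omega>|lebesgue. B n x)) sequentially"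
    using le by (intro always_eventually allI)
  have lim: "(\<lambda>n. LINT x:\<Omega>|lebesgue. E n x) \<longlonglongrightarrow> 0"
    by (rule tendsto_sandwich[OF ev1 ev2 tendsto_const up])
  show ?thesis unfolding H10_grad_def
  proof (intro conjI exI[of _ ch])
    show "H1_grad \<Omega> (\<lambda>x. u x + t * v x) (\<lambda>x. Du x + t *\<^sub>R Dv x)" by (rule H1)
    show "\<forall>n. test_fun \<Omega> (ch n)" using ch by simp
    show "(\<lambda>n. LINT x:\<Omega>|lebesgue. (u x + t * v x - ch n x)\<^sup>2 + (norm (Du x + t *\<^sub>R Dv x - cgrad (ch n) x))\<^sup>2) \<longlonglongrightarrow> 0"
      using lim unfolding E_def .
  qed
qed

lemma has_trace_lin:
  fixes \<Omega> :: "'a::euclidean_space set"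
  assumes o: "open \<Omega>" "bounded \<Omega>" and tr: "has_trace \<Omega> u g" and u: "H1_grad \<Omega> u Du" and v: "H10_grad \<Omega> v Dv"
  shows "has_trace \<Omega> (\<lambda>x. u x + t * v x) g"
proof -
  have vH: "H1_grad \<Omega> v Dv" using v unfolding H10_grad_def by auto
  have "H1 \<Omega> (\<lambda>x. u x + t * v x)" using H1_lin[OF o u vH] unfolding H1_def by blast
  moreover obtain h where h: "H1 \<Omega> h" "continuous_on (closure \<Omega>) h" "\<forall>x\<in>frontier \<Omega>. h x = g x"
    "H10 \<Omega> (\<lambda>x. u x - h x)" using tr unfolding has_trace_def by blast
  obtain Dw where Dw: "H10_grad \<Omega> (\<lambda>x. u x - h x) Dw" using h(4) unfolding H10_def by blast
  have "H10_grad \<Omega> (\<lambda>x. (u x - h x) + t * v x) (\<lambda>x. Dw x + t *\<^sub>R Dv x)" by (rule H10_lin[OF o Dw v])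
  moreover have "(\<lambda>x. (u x - h x) + t * v x) = (\<lambda>x. (u x + t * v x) - h x)" by (simp add: algebra_simps)
  ultimately have "H10 \<Omega> (\<lambda>x. (u x + t * v x) - h x)" unfolding H10_def by auto
  then show ?thesis unfolding has_trace_def using h \<open>H1 \<Omega> (\<lambda>x. u x + t * v x)\<close> by blast
qed

lemma exp_quad:
  fixes z :: real
  assumes "\<bar>z\<bar> \<le> 1"
  shows "\<bar>exp z - 1 - z\<bar> \<le> z\<^sup>2"
proof -
  have lo: "0 \<le> exp z - 1 - z" using exp_ge_add_one_self[of z] by linarith
  have "exp z \<le> 1 + z + z\<^sup>2"
  proof (cases "z \<ge> 0")
    case True
    then show ?thesis using exp_bound[of z] assms by simp
  next
    case False
    define y where "y = - z"
    have y: "0 < y" "y \<le> 1" using False assms unfolding y_def by auto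
    have "1 + y \<le> exp y" by simp
    then have "exp z * (1 + y) \<le> exp z * exp y" by (intro mult_left_mono) auto
    also have "exp z * exp y = 1" unfolding y_def by (simp add: exp_minus_inverse)
    also have "1 \<le> (1 + z + z\<^sup>2) * (1 + y)"
    proof -
      have "(1 + z + z\<^sup>2) * (1 + y) = 1 + y ^ 3" unfolding y_def by (simp add: power2_eq_square power3_eq_cube algebra_simps)
      then show ?thesis using y by simp
    qed
    finally have "exp z * (1 + y) \<le> (1 + z + z\<^sup>2) * (1 + y)" .
    then show ?thesis using y by (simp add: mult_le_cancel_right)
  qed
  then show ?thesis using lo by simp
qed

lemma quad_zero:
  fixes E K \<delta> :: real
  assumes "\<delta> > 0" "K \<ge> 0" "\<And>t. \<bar>t\<bar> \<le> \<delta> \<Longrightarrow> 0 \<le> t * E + K * t\<^sup>2"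
  shows "E = 0"
proof (rule ccontr)
  assume E: "E \<noteq> 0"
  define \<epsilon> where "\<epsilon> = min \<delta> (\<bar>E\<bar> / (K + 1))"
  have ep1: "\<epsilon> > 0" using assms E unfolding \<epsilon>_def by simp
  have ep2: "\<epsilon> \<le> \<delta>" unfolding \<epsilon>_def by simp
  have "\<epsilon> \<le> \<bar>E\<bar> / (K + 1)" unfolding \<epsilon>_def by simp
  then have ep3: "\<epsilon> * (K + 1) \<le> \<bar>E\<bar>" using assms(2) by (simp add: pos_le_divide_eq)
  note ep = ep1 ep2 ep3
  have "\<bar>E\<bar> \<le> K * \<epsilon>"
  proof (cases "E > 0")
    case True
    have "0 \<le> (- \<epsilon>) * E + K * (- \<epsilon>)\<^sup>2" using assms(3)[of "- \<epsilon>"] ep by simp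
    then have "\<epsilon> * E \<le> \<epsilon> * (K * \<epsilon>)" by (simp add: power2_eq_square algebra_simps)
    then show ?thesis using True ep by (simp add: mult_le_cancel_left)
  next
    case False
    then have En: "E < 0" using E by simp
    have "0 \<le> \<epsilon> * E + K * \<epsilon>\<^sup>2" using assms(3)[of "\<epsilon>"] ep by simp
    then have "\<epsilon> * (- E) \<le> \<epsilon> * (K * \<epsilon>)" by (simp add: power2_eq_square algebra_simps)
    then have "- E \<le> K * \<epsilon>" using ep(1) by (rule mult_left_le_imp_le)
    then show ?thesis using En by simp
  qed
  moreover have "K * \<epsilon> < \<epsilon> * (K + 1)" using ep by (simp add: algebra_simps)
  ultimately show False using ep by linarith
qed

lemma pw_bounds:
  fixes T \<xi> :: "nat \<Rightarrow> real" and y V \<Lambda> v :: real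
  assumes T: "\<And>j. 0 \<le> T j" and L: "\<And>j. j < N \<Longrightarrow> \<bar>\<xi> j\<bar> \<le> \<Lambda>" and y: "\<bar>y\<bar> \<le> Y" and LY: "\<Lambda> * Y \<le> 1"
    and vV: "\<bar>v\<bar> \<le> V" and L0: "0 \<le> \<Lambda>"
  shows "(\<Sum>j<N. T j * exp (- \<xi> j * y)) \<le> exp 1 * (\<Sum>j<N. T j)"
    and "\<bar>(- (\<Sum>j<N. \<xi> j * T j)) * v\<bar> \<le> (\<Lambda> * V) * (\<Sum>j<N. T j)"
    and "\<bar>(\<Sum>j<N. T j * exp (- \<xi> j * y)) - (\<Sum>j<N. T j) - y * (- (\<Sum>j<N. \<xi> j * T j))\<bar>
           \<le> (\<Lambda> * Y)\<^sup>2 * (\<Sum>j<N. T j)"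
proof -
  have z: "\<bar>- \<xi> j * y\<bar> \<le> \<Lambda> * Y" if "j < N" for j
  proof -
    have "\<bar>- \<xi> j * y\<bar> = \<bar>\<xi> j\<bar> * \<bar>y\<bar>" by (simp add: abs_mult)
    also have "\<dots> \<le> \<Lambda> * Y" using L[OF that] y by (intro mult_mono) auto
    finally show ?thesis .
  qed
  show "(\<Sum>j<N. T j * exp (- \<xi> j * y)) \<le> exp 1 * (\<Sum>j<N. T j)"
    unfolding sum_distrib_left
  proof (rule sum_mono)
    fix j assume "j \<in> {..<N}"
    then have "- \<xi> j * y \<le> 1" using z[of j] LY by auto
    then have "exp (- \<xi> j * y) \<le> exp 1" by simp
    then show "T j * exp (- \<xi> j * y) \<le> exp 1 * T j" using T[of j] by (simp add: mult.commute mult_left_mono)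
  qed
  show "\<bar>(- (\<Sum>j<N. \<xi> j * T j)) * v\<bar> \<le> (\<Lambda> * V) * (\<Sum>j<N. T j)"
  proof -
    have "\<bar>(- (\<Sum>j<N. \<xi> j * T j)) * v\<bar> = \<bar>\<Sum>j<N. \<xi> j * T j * v\<bar>" by (simp add: abs_mult sum_distrib_right)
    also have "\<dots> \<le> (\<Sum>j<N. \<bar>\<xi> j * T j * v\<bar>)" by (rule sum_abs)
    also have "\<dots> \<le> (\<Sum>j<N. (\<Lambda> * V) * T j)"
    proof (rule sum_mono)
      fix j assume j: "j \<in> {..<N}"
      have "\<bar>\<xi> j * T j * v\<bar> = \<bar>\<xi> j\<bar> * \<bar>v\<bar> * T j" using T[of j] by (simp add: abs_mult)
      also have "\<dots> \<le> \<Lambda> * V * T j" using L[of j] j vV T[of j] by (intro mult_mono) auto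
      finally show "\<bar>\<xi> j * T j * v\<bar> \<le> (\<Lambda> * V) * T j" .
    qed
    also have "\<dots> = (\<Lambda> * V) * (\<Sum>j<N. T j)" by (simp add: sum_distrib_left)
    finally show ?thesis .
  qed
  show "\<bar>(\<Sum>j<N. T j * exp (- \<xi> j * y)) - (\<Sum>j<N. T j) - y * (- (\<Sum>j<N. \<xi> j * T j))\<bar>
           \<le> (\<Lambda> * Y)\<^sup>2 * (\<Sum>j<N. T j)"
  proof -
    have "(\<Sum>j<N. T j * exp (- \<xi> j * y)) - (\<Sum>j<N. T j) - y * (- (\<Sum>j<N. \<xi> j * T j))
        = (\<Sum>j<N. T j * (exp (- \<xi> j * y) - 1 - (- \<xi> j * y)))"
      by (simp add: sum_subtractf sum_distrib_left sum.distrib algebra_simps)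
    also have "\<bar>\<dots>\<bar> \<le> (\<Sum>j<N. \<bar>T j * (exp (- \<xi> j * y) - 1 - (- \<xi> j * y))\<bar>)" by (rule sum_abs)
    also have "\<dots> \<le> (\<Sum>j<N. (\<Lambda> * Y)\<^sup>2 * T j)"
    proof (rule sum_mono)
      fix j assume j: "j \<in> {..<N}"
      have zj: "\<bar>- \<xi> j * y\<bar> \<le> 1" using z[of j] j LY by auto
      have "\<bar>T j * (exp (- \<xi> j * y) - 1 - (- \<xi> j * y))\<bar> = T j * \<bar>exp (- \<xi> j * y) - 1 - (- \<xi> j * y)\<bar>"
        using T[of j] by (simp add: abs_mult)
      also have "\<dots> \<le> T j * (- \<xi> j * y)\<^sup>2" using exp_quad[OF zj] T[of j] by (intro mult_left_mono) auto
      also have "(- \<xi> j * y)\<^sup>2 \<le> (\<Lambda> * Y)\<^sup>2"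
        using power_mono[OF z[of j] abs_ge_zero, of 2] j by simp
      then have "T j * (- \<xi> j * y)\<^sup>2 \<le> T j * (\<Lambda> * Y)\<^sup>2" using T[of j] by (intro mult_left_mono) auto
      finally show "\<bar>T j * (exp (- \<xi> j * y) - 1 - (- \<xi> j * y))\<bar> \<le> (\<Lambda> * Y)\<^sup>2 * T j" by (simp add: mult.commute)
    qed
    also have "\<dots> = (\<Lambda> * Y)\<^sup>2 * (\<Sum>j<N. T j)" by (simp add: sum_distrib_left)
    finally show ?thesis .
  qed
qed

lemma norm_sq_expand: "(norm (a + t *\<^sub>R b))\<^sup>2 = a \<bullet> a + 2 * t * (a \<bullet> b) + t\<^sup>2 * (b \<bullet> b)"
  for a b :: "'a::real_inner"
  unfolding power2_norm_eq_inner by (simp add: inner_add_left inner_add_right inner_commute power2_eq_square algebra_simps)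

lemma EL_abstract:
  fixes \<Omega> :: "'a::euclidean_space set" and eps w :: "'a \<Rightarrow> real" and f :: "'a \<Rightarrow> 'a"
    and u v :: "'a \<Rightarrow> real" and Du Dv :: "'a \<Rightarrow> 'a" and ind :: "'a \<Rightarrow> real"
    and N :: nat and c \<xi> :: "nat \<Rightarrow> real" and Bf bf :: "'a \<Rightarrow> real \<Rightarrow> real"
  assumes o: "open \<Omega>" "bounded \<Omega>"
    and Bf: "Bf = (\<lambda>x t. \<Sum>j<N. c j * ind x * exp (- \<xi> j * t))"
    and bf: "bf = (\<lambda>x t. - (\<Sum>j<N. \<xi> j * (c j * ind x * exp (- \<xi> j * t))))"
    and c: "\<And>j. c j \<ge> 0" and ind: "\<And>x. ind x \<ge> 0"
    and wm: "\<And>j. (\<lambda>x. ind x * exp (- \<xi> j * w x)) \<in> borel_measurable lebesgue"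
    and epsm: "(\<lambda>x. indicator \<Omega> x * eps x) \<in> borel_measurable lebesgue"
    and epsb: "\<And>x. x \<in> \<Omega> \<Longrightarrow> \<bar>eps x\<bar> \<le> EB"
    and fL2: "L2v_on \<Omega> f"
    and u: "H1_grad \<Omega> u Du" and v: "H1_grad \<Omega> v Dv"
    and vb: "AE x in lebesgue. x \<in> \<Omega> \<longrightarrow> \<bar>v x\<bar> \<le> C"
    and Bint: "set_integrable lebesgue \<Omega> (\<lambda>x. Bf x (u x + w x))"
    and min: "\<And>t. Jfun \<Omega> eps Bf w f u Du \<le> Jfun \<Omega> eps Bf w f (\<lambda>x. u x + t * v x) (\<lambda>x. Du x + t *\<^sub>R Dv x)"
  shows "set_integrable lebesgue \<Omega> (\<lambda>x. bf x (u x + w x) * v x) \<and>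
     (LINT x:\<Omega>|lebesgue. eps x * (Du x \<bullet> Dv x)) + (LINT x:\<Omega>|lebesgue. bf x (u x + w x) * v x)
       = (LINT x:\<Omega>|lebesgue. f x \<bullet> Dv x)"
proof -
  have \<Omega>l: "\<Omega> \<in> sets lebesgue" using o(1) by (rule open_leb)
  have uL: "L2_on \<Omega> u" "L2v_on \<Omega> Du" and vL: "L2_on \<Omega> v" "L2v_on \<Omega> Dv"
    using u v unfolding H1_grad_def by auto
  have um: "u \<in> borel_measurable lebesgue" and vm: "v \<in> borel_measurable lebesgue"
    using L2_meas uL vL by auto
  define Cv where "Cv = \<bar>C\<bar>"
  have Cv: "0 \<le> Cv" unfolding Cv_def by simp
  have vb': "AE x in lebesgue. x \<in> \<Omega> \<longrightarrow> \<bar>v x\<bar> \<le> Cv"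
    using vb unfolding Cv_def by eventually_elim auto
  define \<Lambda> where "\<Lambda> = 1 + (\<Sum>j<N. \<bar>\<xi> j\<bar>)"
  have \<Lambda>1: "1 \<le> \<Lambda>" unfolding \<Lambda>_def by (simp add: sum_nonneg)
  have \<Lambda>j: "\<bar>\<xi> j\<bar> \<le> \<Lambda>" if "j < N" for j
  proof -
    have "\<bar>\<xi> j\<bar> \<le> (\<Sum>j<N. \<bar>\<xi> j\<bar>)" using that by (intro member_le_sum) auto
    then show ?thesis unfolding \<Lambda>_def by simp
  qed
  define \<delta> where "\<delta> = 1 / (\<Lambda> * (Cv + 1))"
  have \<delta>: "0 < \<delta>" unfolding \<delta>_def using \<Lambda>1 Cv by simp
  have \<Lambda>\<delta>: "\<Lambda> * (\<bar>t\<bar> * Cv) \<le> 1" if "\<bar>t\<bar> \<le> \<delta>" for t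
  proof -
    have "\<Lambda> * (\<bar>t\<bar> * Cv) \<le> \<Lambda> * (\<delta> * Cv)" using that \<Lambda>1 Cv by (intro mult_left_mono mult_right_mono) auto
    also have "\<dots> = (\<Lambda> * Cv) / (\<Lambda> * (Cv + 1))" unfolding \<delta>_def by simp
    also have "\<dots> \<le> 1"
    proof -
      have p: "0 < \<Lambda> * (Cv + 1)" using \<Lambda>1 Cv by simp
      have "\<Lambda> * Cv \<le> \<Lambda> * (Cv + 1)" using \<Lambda>1 by (simp add: distrib_left)
      then show ?thesis by (subst divide_le_eq_1_pos[OF p])
    qed
    finally show ?thesis .
  qed
  define s where "s x = u x + w x" for x
  define T where "T j x = c j * ind x * exp (- \<xi> j * s x)" for j x
  have Tnn: "0 \<le> T j x" for j x unfolding T_def using c ind by simp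
  have Tm: "T j \<in> borel_measurable lebesgue" for j
  proof -
    have "T j = (\<lambda>x. c j * (ind x * exp (- \<xi> j * w x)) * exp (- \<xi> j * u x))"
      unfolding T_def s_def by (intro ext) (simp add: distrib_left exp_add[symmetric] algebra_simps)
    then show ?thesis using wm[of j] um by simp
  qed
  have BfT: "Bf x (s x + y) = (\<Sum>j<N. T j x * exp (- \<xi> j * y))" for x y
    unfolding Bf T_def by (intro sum.cong refl) (simp add: distrib_left exp_add[symmetric] algebra_simps)
  have S0: "Bf x (s x) = (\<Sum>j<N. T j x)" for x
    using BfT[of x 0] by simp
  have bfT: "bf x (s x) = - (\<Sum>j<N. \<xi> j * T j x)" for x
    unfolding bf T_def by simp
  define S where "S x = (\<Sum>j<N. T j x)" for x
  have Snn: "0 \<le> S x" for x unfolding S_def using Tnn by (simp add: sum_nonneg)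
  have Sint: "set_integrable lebesgue \<Omega> S"
    using Bint unfolding S_def S0[symmetric] s_def .
  have Sm: "S \<in> borel_measurable lebesgue" unfolding S_def using Tm by measurable
  define Bt where "Bt t x = (\<Sum>j<N. T j x * exp (- \<xi> j * (t * v x)))" for t x
  have Btm: "Bt t \<in> borel_measurable lebesgue" for t unfolding Bt_def[abs_def] using Tm vm by measurable
  define bv where "bv x = (- (\<Sum>j<N. \<xi> j * T j x)) * v x" for x
  have bvm: "bv \<in> borel_measurable lebesgue" unfolding bv_def[abs_def] using Tm vm by measurable
  have bv_eq: "bf x (u x + w x) * v x = bv x" for x unfolding bv_def bfT[symmetric] s_def by simp
  have Bt_eq: "Bf x (u x + t * v x + w x) = Bt t x" for t x
  proof -
    have "Bf x (u x + t * v x + w x) = Bf x (s x + t * v x)" unfolding s_def by (simp add: algebra_simps)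
    then show ?thesis unfolding Bt_def BfT .
  qed
  have bvint: "set_integrable lebesgue \<Omega> bv"
  proof (rule set_integrable_bound[OF set_integrable_mult_right[OF Sint, of "\<Lambda> * Cv"]])
    show "set_borel_measurable lebesgue \<Omega> bv" unfolding set_borel_measurable_def using bvm \<Omega>l by measurable
    show "AE x in lebesgue. x \<in> \<Omega> \<longrightarrow> norm (bv x) \<le> norm (\<Lambda> * Cv * S x)"
      using vb'
    proof eventually_elim
      case (elim x)
      show ?case
      proof
        assume "x \<in> \<Omega>"
        then have "\<bar>v x\<bar> \<le> Cv" using elim by simp
        then have "\<bar>bv x\<bar> \<le> (\<Lambda> * Cv) * S x" unfolding bv_def S_def
          using pw_bounds(2)[where T="\<lambda>j. T j x" and v="v x" and V=Cv and \<Lambda>=\<Lambda> and y=0 and Y=0 and N=N and \<xi>=\<xi>] Tnn \<Lambda>j \<Lambda>1 by auto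
        also have "\<dots> \<le> norm (\<Lambda> * Cv * S x)" by simp
        finally show "norm (bv x) \<le> norm (\<Lambda> * Cv * S x)" by simp
      qed
    qed
  qed
  have Bt_nn: "0 \<le> Bt t x" for t x unfolding Bt_def using Tnn by (simp add: sum_nonneg)
  have Btint: "set_integrable lebesgue \<Omega> (Bt t)" if t: "\<bar>t\<bar> \<le> \<delta>" for t
  proof (rule set_integrable_bound[OF set_integrable_mult_right[OF Sint, of "exp 1"]])
    show "set_borel_measurable lebesgue \<Omega> (Bt t)" unfolding set_borel_measurable_def using Btm \<Omega>l by measurable
    show "AE x in lebesgue. x \<in> \<Omega> \<longrightarrow> norm (Bt t x) \<le> norm (exp 1 * S x)"
      using vb'
    proof eventually_elim
      case (elim x)
      show ?case
      proof
        assume "x \<in> \<Omega>"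
        then have vx: "\<bar>v x\<bar> \<le> Cv" using elim by simp
        have y: "\<bar>t * v x\<bar> \<le> \<bar>t\<bar> * Cv" using vx by (simp add: abs_mult mult_left_mono)
        have "Bt t x \<le> exp 1 * S x" unfolding Bt_def S_def
          using pw_bounds(1)[where T="\<lambda>j. T j x" and v=0 and V=0 and \<Lambda>=\<Lambda> and y="t * v x" and Y="\<bar>t\<bar> * Cv" and N=N and \<xi>=\<xi>]
            Tnn \<Lambda>j \<Lambda>1 y \<Lambda>\<delta>[OF t] by auto
        then show "norm (Bt t x) \<le> norm (exp 1 * S x)" using Bt_nn[of t x] Snn[of x] by simp
      qed
    qed
  qed
  define Rt where "Rt t x = Bt t x - S x - t * bv x" for t x
  have Rint: "set_integrable lebesgue \<Omega> (Rt t)" if t: "\<bar>t\<bar> \<le> \<delta>" for t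
    unfolding Rt_def[abs_def] using Btint[OF t] Sint bvint
    by (intro set_integral_diff set_integrable_mult_right) auto
  define KR where "KR = (\<Lambda> * Cv)\<^sup>2"
  have KR: "0 \<le> KR" unfolding KR_def by simp
  have Rpw: "AE x in lebesgue. x \<in> \<Omega> \<longrightarrow> \<bar>Rt t x\<bar> \<le> KR * t\<^sup>2 * S x" if t: "\<bar>t\<bar> \<le> \<delta>" for t
    using vb'
  proof eventually_elim
    case (elim x)
    show ?case
    proof
      assume "x \<in> \<Omega>"
      then have vx: "\<bar>v x\<bar> \<le> Cv" using elim by simp
      have y: "\<bar>t * v x\<bar> \<le> \<bar>t\<bar> * Cv" using vx by (simp add: abs_mult mult_left_mono)
      have eq: "Rt t x = (\<Sum>j<N. T j x * exp (- \<xi> j * (t * v x))) - (\<Sum>j<N. T j x) - (t * v x) * (- (\<Sum>j<N. \<xi> j * T j x))"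
        unfolding Rt_def Bt_def S_def bv_def by (simp add: algebra_simps)
      have "\<bar>Rt t x\<bar> \<le> (\<Lambda> * (\<bar>t\<bar> * Cv))\<^sup>2 * S x" unfolding eq S_def
        using pw_bounds(3)[where T="\<lambda>j. T j x" and v=0 and V=0 and \<Lambda>=\<Lambda> and y="t * v x" and Y="\<bar>t\<bar> * Cv" and N=N and \<xi>=\<xi>]
          Tnn \<Lambda>j \<Lambda>1 y \<Lambda>\<delta>[OF t] by auto
      also have "(\<Lambda> * (\<bar>t\<bar> * Cv))\<^sup>2 = KR * t\<^sup>2" unfolding KR_def by (simp add: power_mult_distrib)
      finally show "\<bar>Rt t x\<bar> \<le> KR * t\<^sup>2 * S x" .
    qed
  qed
  have Rle: "\<bar>LINT x:\<Omega>|lebesgue. Rt t x\<bar> \<le> KR * t\<^sup>2 * (LINT x:\<Omega>|lebesgue. S x)" if t: "\<bar>t\<bar> \<le> \<delta>" for t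
  proof -
    have iK: "set_integrable lebesgue \<Omega> (\<lambda>x. KR * t\<^sup>2 * S x)" using Sint by (intro set_integrable_mult_right)
    have "(LINT x:\<Omega>|lebesgue. Rt t x) \<le> (LINT x:\<Omega>|lebesgue. KR * t\<^sup>2 * S x)"
      using Rint[OF t] iK by (rule set_integral_mono_AE) (use Rpw[OF t] in \<open>eventually_elim, auto\<close>)
    moreover have "(LINT x:\<Omega>|lebesgue. - Rt t x) \<le> (LINT x:\<Omega>|lebesgue. KR * t\<^sup>2 * S x)"
      using set_integrable_mult_right[OF Rint[OF t], of "-1"] iK
      by (intro set_integral_mono_AE) (use Rpw[OF t] in \<open>auto elim!: eventually_mono\<close>)
    moreover have "(LINT x:\<Omega>|lebesgue. - Rt t x) = - (LINT x:\<Omega>|lebesgue. Rt t x)"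
      using Rint[OF t] by (rule set_integral_uminus)
    moreover have "(LINT x:\<Omega>|lebesgue. KR * t\<^sup>2 * S x) = KR * t\<^sup>2 * (LINT x:\<Omega>|lebesgue. S x)" by simp
    ultimately show ?thesis by linarith
  qed
  have ISnn: "0 \<le> (LINT x:\<Omega>|lebesgue. S x)" by (rule set_integral_nonneg_real) (rule Snn)
  define e where "e x = indicator \<Omega> x * eps x" for x
  have em: "e \<in> borel_measurable lebesgue" using epsm unfolding e_def[abs_def] .
  have eb: "\<bar>e x\<bar> \<le> EB" if "x \<in> \<Omega>" for x unfolding e_def using epsb[OF that] that by simp
  have epsint: "set_integrable lebesgue \<Omega> (\<lambda>x. eps x * (F x \<bullet> G x))"
    if "L2v_on \<Omega> F" "L2v_on \<Omega> G" for F G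
  proof -
    have "set_integrable lebesgue \<Omega> (\<lambda>x. e x * (F x \<bullet> G x))" by (rule L2v_prod[OF o(1) that em eb])
    moreover have "set_integrable lebesgue \<Omega> (\<lambda>x. e x * (F x \<bullet> G x)) = set_integrable lebesgue \<Omega> (\<lambda>x. eps x * (F x \<bullet> G x))"
      by (rule set_integrable_cong) (auto simp: e_def)
    ultimately show ?thesis by simp
  qed
  have i11: "set_integrable lebesgue \<Omega> (\<lambda>x. eps x * (Du x \<bullet> Du x))" using epsint uL(2) by simp
  have i12: "set_integrable lebesgue \<Omega> (\<lambda>x. eps x * (Du x \<bullet> Dv x))" using epsint uL(2) vL(2) by simp
  have i22: "set_integrable lebesgue \<Omega> (\<lambda>x. eps x * (Dv x \<bullet> Dv x))" using epsint vL(2) by simp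
  have if1: "set_integrable lebesgue \<Omega> (\<lambda>x. f x \<bullet> Du x)"
    using L2v_prod[OF o(1) fL2 uL(2), of "\<lambda>x. 1" 1] by simp
  have if2: "set_integrable lebesgue \<Omega> (\<lambda>x. f x \<bullet> Dv x)"
    using L2v_prod[OF o(1) fL2 vL(2), of "\<lambda>x. 1" 1] by simp
  define A0 where "A0 = (LINT x:\<Omega>|lebesgue. eps x * (Du x \<bullet> Du x))"
  define A1 where "A1 = (LINT x:\<Omega>|lebesgue. eps x * (Du x \<bullet> Dv x))"
  define A2 where "A2 = (LINT x:\<Omega>|lebesgue. eps x * (Dv x \<bullet> Dv x))"
  define F0 where "F0 = (LINT x:\<Omega>|lebesgue. f x \<bullet> Du x)"
  define F1 where "F1 = (LINT x:\<Omega>|lebesgue. f x \<bullet> Dv x)"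
  define IS where "IS = (LINT x:\<Omega>|lebesgue. S x)"
  define IB where "IB = (LINT x:\<Omega>|lebesgue. bv x)"
  have P: "(LINT x:\<Omega>|lebesgue. eps x * (norm (Du x + t *\<^sub>R Dv x))\<^sup>2) = A0 + 2 * t * A1 + t\<^sup>2 * A2" for t
  proof -
    have "(LINT x:\<Omega>|lebesgue. eps x * (norm (Du x + t *\<^sub>R Dv x))\<^sup>2)
        = (LINT x:\<Omega>|lebesgue. eps x * (Du x \<bullet> Du x) + (2 * t) * (eps x * (Du x \<bullet> Dv x)) + t\<^sup>2 * (eps x * (Dv x \<bullet> Dv x)))"
      unfolding norm_sq_expand by (simp add: algebra_simps)
    also have "\<dots> = A0 + 2 * t * A1 + t\<^sup>2 * A2"
      unfolding A0_def A1_def A2_def using i11 i12 i22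
      by (simp add: set_integral_add(1) set_integral_add(2) set_integrable_mult_right)
    finally show ?thesis .
  qed
  have P0: "(LINT x:\<Omega>|lebesgue. eps x * (norm (Du x))\<^sup>2) = A0"
    unfolding A0_def by (simp add: power2_norm_eq_inner)
  have Fl: "(LINT x:\<Omega>|lebesgue. f x \<bullet> (Du x + t *\<^sub>R Dv x)) = F0 + t * F1" for t
  proof -
    have "(LINT x:\<Omega>|lebesgue. f x \<bullet> (Du x + t *\<^sub>R Dv x)) = (LINT x:\<Omega>|lebesgue. f x \<bullet> Du x + t * (f x \<bullet> Dv x))"
      by (simp add: inner_add_right)
    also have "\<dots> = F0 + t * F1" unfolding F0_def F1_def using if1 if2
      by (simp add: set_integral_add(2) set_integrable_mult_right)
    finally show ?thesis .
  qed
  have Bl: "(LINT x:\<Omega>|lebesgue. Bt t x) = IS + t * IB + (LINT x:\<Omega>|lebesgue. Rt t x)" if t: "\<bar>t\<bar> \<le> \<delta>" for t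
  proof -
    have "(LINT x:\<Omega>|lebesgue. Bt t x) = (LINT x:\<Omega>|lebesgue. S x + t * bv x + Rt t x)"
      unfolding Rt_def by simp
    also have "\<dots> = IS + t * IB + (LINT x:\<Omega>|lebesgue. Rt t x)" unfolding IS_def IB_def
      using Sint bvint Rint[OF t] by (simp add: set_integral_add(1) set_integral_add(2) set_integrable_mult_right)
    finally show ?thesis .
  qed
  have J0: "Jfun \<Omega> eps Bf w f u Du = ereal (1/2 * A0 + IS - F0)"
  proof -
    have "(\<lambda>x. Bf x (u x + w x)) = S" using S0 unfolding S_def s_def by (intro ext) simp
    then show ?thesis unfolding Jfun_def using Bint P0 unfolding IS_def F0_def by simp
  qed
  have Jt: "Jfun \<Omega> eps Bf w f (\<lambda>x. u x + t * v x) (\<lambda>x. Du x + t *\<^sub>R Dv x)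
      = ereal (1/2 * (A0 + 2 * t * A1 + t\<^sup>2 * A2) + (IS + t * IB + (LINT x:\<Omega>|lebesgue. Rt t x)) - (F0 + t * F1))"
    if t: "\<bar>t\<bar> \<le> \<delta>" for t
  proof -
    have "(\<lambda>x. Bf x (u x + t * v x + w x)) = Bt t" using Bt_eq by (intro ext) simp
    then show ?thesis unfolding Jfun_def using Btint[OF t] P[of t] Fl[of t] Bl[OF t] by simp
  qed
  define E where "E = A1 + IB - F1"
  define K where "K = \<bar>A2\<bar> / 2 + KR * IS"
  have "0 \<le> IS" unfolding IS_def by (rule ISnn)
  then have K: "0 \<le> K" unfolding K_def using KR by simp
  have "0 \<le> t * E + K * t\<^sup>2" if t: "\<bar>t\<bar> \<le> \<delta>" for t
  proof -
    have "1/2 * A0 + IS - F0 \<le> 1/2 * (A0 + 2 * t * A1 + t\<^sup>2 * A2) + (IS + t * IB + (LINT x:\<Omega>|lebesgue. Rt t x)) - (F0 + t * F1)"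
      using min[of t] unfolding J0 Jt[OF t] by simp
    moreover have "1/2 * (A0 + 2 * t * A1 + t\<^sup>2 * A2) + (IS + t * IB + (LINT x:\<Omega>|lebesgue. Rt t x)) - (F0 + t * F1)
        - (1/2 * A0 + IS - F0) = t * E + (t\<^sup>2 * A2 / 2 + (LINT x:\<Omega>|lebesgue. Rt t x))"
      unfolding E_def by (simp add: algebra_simps)
    moreover have "t\<^sup>2 * A2 / 2 \<le> t\<^sup>2 * (\<bar>A2\<bar> / 2)"
    proof -
      have "t\<^sup>2 * (A2 / 2) \<le> t\<^sup>2 * (\<bar>A2\<bar> / 2)" by (rule mult_left_mono) auto
      then show ?thesis by simp
    qed
    moreover have "(LINT x:\<Omega>|lebesgue. Rt t x) \<le> KR * t\<^sup>2 * IS" using Rle[OF t] unfolding IS_def by simp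
    moreover have "K * t\<^sup>2 = t\<^sup>2 * (\<bar>A2\<bar> / 2) + KR * t\<^sup>2 * IS" unfolding K_def by (simp add: algebra_simps)
    ultimately show ?thesis by linarith
  qed
  then have "E = 0" by (rule quad_zero[OF \<delta> K])
  then have "A1 + IB = F1" unfolding E_def by simp
  moreover have "set_integrable lebesgue \<Omega> (\<lambda>x. bf x (u x + w x) * v x)" using bvint unfolding bv_eq .
  moreover have "(LINT x:\<Omega>|lebesgue. bf x (u x + w x) * v x) = IB" unfolding IB_def bv_eq ..
  ultimately show ?thesis unfolding A1_def F1_def by simp
qed

lemma frontier_sub:
  fixes \<Omega> \<Omega>m :: "'a::euclidean_space set"
  assumes om: "open \<Omega>m" and c1: "C1_boundary \<Omega>m" and cl: "closure \<Omega>m \<subseteq> \<Omega>" and o: "open \<Omega>"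
  shows "frontier \<Omega>m \<subseteq> closure (\<Omega> - closure \<Omega>m)"
proof
  fix x assume x: "x \<in> frontier \<Omega>m"
  obtain r e \<gamma> D where r: "r > 0" and e: "norm e = 1"
    and \<gamma>d: "\<And>z. (\<gamma> has_derivative (\<lambda>h. D z \<bullet> h)) (at z)"
    and eq: "\<Omega>m \<inter> ball x r = {y \<in> ball x r. y \<bullet> e < \<gamma> (y - (y \<bullet> e) *\<^sub>R e)}"
    using c1 x unfolding C1_boundary_def by blast
  have \<gamma>c: "continuous_on UNIV \<gamma>"
    using \<gamma>d by (meson continuous_at_imp_continuous_on has_derivative_continuous)
  have xnot: "x \<notin> \<Omega>m" and xcl: "x \<in> closure \<Omega>m"
    using x om unfolding frontier_def by (auto simp: interior_open)
  have xb: "x \<in> ball x r" using r by simp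
  have ge: "\<gamma> (x - (x \<bullet> e) *\<^sub>R e) \<le> x \<bullet> e"
  proof (rule ccontr)
    assume "\<not> \<gamma> (x - (x \<bullet> e) *\<^sub>R e) \<le> x \<bullet> e"
    with xb have "x \<in> {y \<in> ball x r. y \<bullet> e < \<gamma> (y - (y \<bullet> e) *\<^sub>R e)}" by auto
    then have "x \<in> \<Omega>m" using eq by blast
    then show False using xnot by simp
  qed
  have "x \<in> \<Omega>" using xcl cl by auto
  then obtain d where d: "d > 0" "ball x d \<subseteq> \<Omega>" using o open_contains_ball by blast
  define U where "U = ball x r \<inter> {z. \<gamma> (z - (z \<bullet> e) *\<^sub>R e) < z \<bullet> e}"
  have "open {z. \<gamma> (z - (z \<bullet> e) *\<^sub>R e) < z \<bullet> e}"
    by (rule open_Collect_less) (auto intro!: continuous_intros continuous_on_compose2[OF \<gamma>c])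
  then have Uo: "open U" unfolding U_def by auto
  have "U \<inter> \<Omega>m = {}"
  proof (rule ccontr)
    assume "U \<inter> \<Omega>m \<noteq> {}"
    then obtain z where z: "z \<in> U" "z \<in> \<Omega>m" by blast
    then have "z \<in> \<Omega>m \<inter> ball x r" unfolding U_def by auto
    then have "z \<bullet> e < \<gamma> (z - (z \<bullet> e) *\<^sub>R e)" using eq by auto
    then show False using z(1) unfolding U_def by auto
  qed
  then have Ucl: "U \<inter> closure \<Omega>m = {}" using open_Int_closure_eq_empty[OF Uo] by simp
  have ee: "e \<bullet> e = 1" using e by (simp add: norm_eq_1)
  show "x \<in> closure (\<Omega> - closure \<Omega>m)"
    unfolding closure_approachable
  proof (intro allI impI)
    fix \<epsilon> :: real assume \<epsilon>: "\<epsilon> > 0"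
    define s where "s = min \<epsilon> (min r d) / 2"
    have s: "0 < s" "s < \<epsilon>" "s < r" "s < d" unfolding s_def using \<epsilon> r d by auto
    define y where "y = x + s *\<^sub>R e"
    have dy: "dist y x = s" unfolding y_def using e s by (simp add: dist_norm)
    have ye: "y \<bullet> e = x \<bullet> e + s" unfolding y_def using ee by (simp add: inner_add_left)
    have py: "y - (y \<bullet> e) *\<^sub>R e = x - (x \<bullet> e) *\<^sub>R e" unfolding ye unfolding y_def by (simp add: algebra_simps)
    have "y \<in> U" unfolding U_def using dy s ge ye py by (auto simp: dist_commute)
    then have "y \<notin> closure \<Omega>m" using Ucl by auto
    moreover have "y \<in> \<Omega>" using dy s d by (auto simp: dist_commute)
    ultimately show "\<exists>y\<in>\<Omega> - closure \<Omega>m. dist y x < \<epsilon>" using dy s by auto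
  qed
qed

lemma radial_deriv:
  fixes a :: "nat \<Rightarrow> 'a::euclidean_space" and x :: 'a
  assumes xa: "\<And>i. i < N \<Longrightarrow> x \<noteq> a i"
    and \<phi>: "\<And>r. r > 0 \<Longrightarrow> (\<phi> has_real_derivative \<phi>' r) (at r)"
  shows "((\<lambda>x. K * (\<Sum>i<N. z i * \<phi> (norm (x - a i)))) has_derivative
     (\<lambda>h. (K *\<^sub>R (\<Sum>i<N. (z i * \<phi>' (norm (x - a i)) / norm (x - a i)) *\<^sub>R (x - a i))) \<bullet> h)) (at x)"
proof -
  have t: "((\<lambda>x. z i * \<phi> (norm (x - a i))) has_derivative
      (\<lambda>h. z i * (h \<bullet> sgn (x - a i) * \<phi>' (norm (x - a i))))) (at x)" if i: "i \<in> {..<N}" for i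
  proof -
    have nz: "x - a i \<noteq> 0" using xa i by auto
    have "((\<lambda>x. x - a i) has_derivative (\<lambda>h. h)) (at x)" by (auto intro!: derivative_eq_intros)
    from has_derivative_compose[OF this has_derivative_norm[OF nz]]
    have "((\<lambda>x. norm (x - a i)) has_derivative (\<lambda>h. h \<bullet> sgn (x - a i))) (at x)" by simp
    from DERIV_compose_FDERIV[OF \<phi>[of "norm (x - a i)"] this]
    have "((\<lambda>x. \<phi> (norm (x - a i))) has_derivative (\<lambda>h. h \<bullet> sgn (x - a i) * \<phi>' (norm (x - a i)))) (at x)"
      using nz by simp
    then show ?thesis by (rule has_derivative_mult_right)
  qed
  have "((\<lambda>x. (\<Sum>i<N. z i * \<phi> (norm (x - a i)))) has_derivative
      (\<lambda>h. (\<Sum>i<N. z i * (h \<bullet> sgn (x - a i) * \<phi>' (norm (x - a i)))))) (at x)"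
    by (rule has_derivative_sum) (rule t)
  then have "((\<lambda>x. K * (\<Sum>i<N. z i * \<phi> (norm (x - a i)))) has_derivative
      (\<lambda>h. K * (\<Sum>i<N. z i * (h \<bullet> sgn (x - a i) * \<phi>' (norm (x - a i)))))) (at x)"
    by (rule has_derivative_mult_right)
  then show ?thesis
  proof (rule has_derivative_eq_rhs)
    show "(\<lambda>h. K * (\<Sum>i<N. z i * (h \<bullet> sgn (x - a i) * \<phi>' (norm (x - a i))))) =
      (\<lambda>h. (K *\<^sub>R (\<Sum>i<N. (z i * \<phi>' (norm (x - a i)) / norm (x - a i)) *\<^sub>R (x - a i))) \<bullet> h)"
    proof (intro ext)
      fix h
      have "(K *\<^sub>R (\<Sum>i<N. (z i * \<phi>' (norm (x - a i)) / norm (x - a i)) *\<^sub>R (x - a i))) \<bullet> h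
          = K * (\<Sum>i<N. (z i * \<phi>' (norm (x - a i)) / norm (x - a i)) * ((x - a i) \<bullet> h))"
        unfolding inner_scaleR_left inner_sum_left ..
      also have "\<dots> = K * (\<Sum>i<N. z i * (h \<bullet> sgn (x - a i) * \<phi>' (norm (x - a i))))"
        unfolding sgn_div_norm inner_scaleR_right inner_commute[of h]
        by (intro arg_cong[where f="\<lambda>y. K * y"] sum.cong refl) (simp add: divide_inverse ac_simps)
      finally show "K * (\<Sum>i<N. z i * (h \<bullet> sgn (x - a i) * \<phi>' (norm (x - a i)))) =
        (K *\<^sub>R (\<Sum>i<N. (z i * \<phi>' (norm (x - a i)) / norm (x - a i)) *\<^sub>R (x - a i))) \<bullet> h" by (rule sym)
    qed
  qed
qed

lemma cont_ind_meas:
  fixes g :: "'a::euclidean_space \<Rightarrow> 'b::euclidean_space"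
  assumes "A \<in> sets borel" "continuous_on A g"
  shows "(\<lambda>x. indicator A x *\<^sub>R g x) \<in> borel_measurable lebesgue"
proof -
  have "(\<lambda>x. indicator A x *\<^sub>R g x) \<in> borel_measurable borel"
    by (rule borel_measurable_continuous_on_indicator[OF assms])
  then have "(\<lambda>x. indicator A x *\<^sub>R g x) \<in> borel_measurable lborel" unfolding measurable_lborel2 .
  then show ?thesis by (rule measurable_completion)
qed

lemma compact_bound:
  fixes g :: "'a::euclidean_space \<Rightarrow> 'b::real_normed_vector"
  assumes "compact S" "continuous_on S g"
  shows "\<exists>C. \<forall>x\<in>S. norm (g x) \<le> C"
proof -
  have "compact (g ` S)" by (rule compact_continuous_image[OF assms(2) assms(1)])
  then have "bounded (g ` S)" by (rule compact_imp_bounded)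
  then show ?thesis unfolding bounded_iff by auto
qed

lemma L2v_bdd:
  fixes \<Omega> :: "'a::euclidean_space set" and F :: "'a \<Rightarrow> 'a"
  assumes o: "open \<Omega>" "bounded \<Omega>" and m: "F \<in> borel_measurable lebesgue" and b: "\<And>x. x \<in> \<Omega> \<Longrightarrow> norm (F x) \<le> C"
  shows "L2v_on \<Omega> F"
proof -
  have "set_integrable lebesgue \<Omega> (\<lambda>x. (norm (F x))\<^sup>2)"
  proof (rule si_bound[OF si_const[OF o, of "C\<^sup>2"] _ o(1)])
    show "(\<lambda>x. (norm (F x))\<^sup>2) \<in> borel_measurable lebesgue" using m by measurable
    show "\<bar>(norm (F x))\<^sup>2\<bar> \<le> C\<^sup>2" if "x \<in> \<Omega>" for x
      using power_mono[OF b[OF that] norm_ge_zero, of 2] by simp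
  qed
  then show ?thesis unfolding L2v_on_def using m by blast
qed

lemma L2v_scale:
  fixes \<Omega> :: "'a::euclidean_space set" and F :: "'a \<Rightarrow> 'a"
  assumes o: "open \<Omega>" and F: "L2v_on \<Omega> F" and m: "c \<in> borel_measurable lebesgue" and b: "\<And>x. x \<in> \<Omega> \<Longrightarrow> \<bar>c x\<bar> \<le> C"
  shows "L2v_on \<Omega> (\<lambda>x. c x *\<^sub>R F x)"
proof -
  have Fm: "F \<in> borel_measurable lebesgue" using F unfolding L2v_on_def by simp
  have m2: "(\<lambda>x. c x *\<^sub>R F x) \<in> borel_measurable lebesgue" using Fm m by measurable
  have "set_integrable lebesgue \<Omega> (\<lambda>x. (norm (c x *\<^sub>R F x))\<^sup>2)"
  proof (rule si_bound[OF _ _ o(1)])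
    show "set_integrable lebesgue \<Omega> (\<lambda>x. C\<^sup>2 * (norm (F x))\<^sup>2)"
      using F unfolding L2v_on_def by (intro set_integrable_mult_right) auto
    show "(\<lambda>x. (norm (c x *\<^sub>R F x))\<^sup>2) \<in> borel_measurable lebesgue" using m2 by measurable
    show "\<bar>(norm (c x *\<^sub>R F x))\<^sup>2\<bar> \<le> C\<^sup>2 * (norm (F x))\<^sup>2" if "x \<in> \<Omega>" for x
    proof -
      have "(c x)\<^sup>2 \<le> C\<^sup>2" using power_mono[OF b[OF that] abs_ge_zero, of 2] by simp
      then have "(c x)\<^sup>2 * (norm (F x))\<^sup>2 \<le> C\<^sup>2 * (norm (F x))\<^sup>2" by (rule mult_right_mono) simp
      then show ?thesis by (simp add: power_mult_distrib)
    qed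
  qed
  then show ?thesis unfolding L2v_on_def using m2 by blast
qed

lemma H10_zero: "H10_grad \<Omega> (\<lambda>x. 0) (\<lambda>x. 0)"
proof -
  have "L2_on \<Omega> (\<lambda>x. 0)" "L2v_on \<Omega> (\<lambda>x. 0)" unfolding L2_on_def L2v_on_def set_integrable_def by simp_all
  moreover have "weak_grad \<Omega> (\<lambda>x. 0) (\<lambda>x. 0)" unfolding weak_grad_def by simp
  ultimately have H1: "H1_grad \<Omega> (\<lambda>x. 0) (\<lambda>x. 0)" unfolding H1_grad_def by simp
  show ?thesis unfolding H10_grad_def
  proof (intro conjI exI[of _ "\<lambda>n x. 0"])
    show "H1_grad \<Omega> (\<lambda>x. 0) (\<lambda>x. 0)" by (rule H1)
    show "\<forall>n. test_fun \<Omega> (\<lambda>x. 0)" by (simp add: test_fun_zero)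
    show "(\<lambda>n. LINT x:\<Omega>|lebesgue. (0 - 0)\<^sup>2 + (norm (0 - cgrad (\<lambda>x. 0) x))\<^sup>2) \<longlonglongrightarrow> 0"
      by (simp add: cgrad_zero)
  qed
qed

lemma B_int_cont:
  fixes \<Omega> A :: "'a::euclidean_space set" and g :: "'a \<Rightarrow> real"
  assumes o: "open \<Omega>" "bounded \<Omega>" and A: "open A" and gc: "continuous_on A g" and gb: "\<And>x. x \<in> A \<Longrightarrow> \<bar>g x\<bar> \<le> Gb"
  shows "set_integrable lebesgue \<Omega> (\<lambda>x. \<Sum>j<N. c j * indicator A x * exp (- \<xi> j * g x))"
proof (rule si_bound[OF si_const[OF o] _ o(1)])
  have Ab: "A \<in> sets borel" using A by (simp add: borel_open)
  have tm: "(\<lambda>x. indicator A x *\<^sub>R exp (- \<xi> j * g x)) \<in> borel_measurable lebesgue" for j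
    by (rule cont_ind_meas[OF Ab]) (intro continuous_intros gc)
  show "(\<lambda>x. \<Sum>j<N. c j * indicator A x * exp (- \<xi> j * g x)) \<in> borel_measurable lebesgue"
  proof -
    have "(\<lambda>x. \<Sum>j<N. c j * indicator A x * exp (- \<xi> j * g x)) = (\<lambda>x. \<Sum>j<N. c j * (indicator A x *\<^sub>R exp (- \<xi> j * g x)))"
      by (simp add: mult.assoc)
    also have "\<dots> \<in> borel_measurable lebesgue" using tm by measurable
    finally show ?thesis .
  qed
  show "\<bar>\<Sum>j<N. c j * indicator A x * exp (- \<xi> j * g x)\<bar> \<le> (\<Sum>j<N. \<bar>c j\<bar> * exp (\<bar>\<xi> j\<bar> * \<bar>Gb\<bar>))" for x
  proof -
    have "\<bar>\<Sum>j<N. c j * indicator A x * exp (- \<xi> j * g x)\<bar> \<le> (\<Sum>j<N. \<bar>c j * indicator A x * exp (- \<xi> j * g x)\<bar>)"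
      by (rule sum_abs)
    also have "\<dots> \<le> (\<Sum>j<N. \<bar>c j\<bar> * exp (\<bar>\<xi> j\<bar> * \<bar>Gb\<bar>))"
    proof (rule sum_mono)
      fix j
      show "\<bar>c j * indicator A x * exp (- \<xi> j * g x)\<bar> \<le> \<bar>c j\<bar> * exp (\<bar>\<xi> j\<bar> * \<bar>Gb\<bar>)"
      proof (cases "x \<in> A")
        case True
        have "- \<xi> j * g x \<le> \<bar>\<xi> j\<bar> * \<bar>Gb\<bar>"
        proof -
          have "- \<xi> j * g x \<le> \<bar>\<xi> j\<bar> * \<bar>g x\<bar>" by (simp add: abs_mult[symmetric])
          also have "\<dots> \<le> \<bar>\<xi> j\<bar> * \<bar>Gb\<bar>" using gb[OF True] by (intro mult_left_mono) auto
          finally show ?thesis .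
        qed
        then have "exp (- \<xi> j * g x) \<le> exp (\<bar>\<xi> j\<bar> * \<bar>Gb\<bar>)" by simp
        then show ?thesis using True by (simp add: abs_mult mult_left_mono)
      next
        case False
        then show ?thesis by simp
      qed
    qed
    finally show ?thesis .
  qed
qed

theorem proposition4p3:
  fixes \<Omega> \<Omega>m \<Omega>s \<Omega>ions :: "'a::euclidean_space set"
    and epsm :: real and epss eps :: "'a \<Rightarrow> real" and g\<Omega> :: "'a \<Rightarrow> real"
    and e0 kB T :: real
    and Nm :: nat and xs :: "nat \<Rightarrow> 'a" and z :: "nat \<Rightarrow> real"
    and Nions :: nat and M \<xi> :: "nat \<Rightarrow> real"
    and b B :: "'a \<Rightarrow> real \<Rightarrow> real" and G :: "'a \<Rightarrow> real" and DG :: "'a \<Rightarrow> 'a"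
    and uH :: "'a \<Rightarrow> real" and DuH :: "'a \<Rightarrow> 'a"
    and w :: "'a \<Rightarrow> real" and f :: "'a \<Rightarrow> 'a" and gbar :: "'a \<Rightarrow> real"
    and u :: "'a \<Rightarrow> real" and Du :: "'a \<Rightarrow> 'a"
  assumes dim: "DIM('a) = 2 \<or> DIM('a) = 3"
    and \<Omega>: "open \<Omega>" "bounded \<Omega>" "lipschitz_boundary \<Omega>"
    and \<Omega>m: "open \<Omega>m" "closure \<Omega>m \<subseteq> \<Omega>" "C1_boundary \<Omega>m"
    and \<Omega>s_def: "\<Omega>s = \<Omega> - closure \<Omega>m"
    and \<Omega>ions: "open \<Omega>ions" "\<Omega>ions \<subseteq> \<Omega>s"
    and epsm_pos: "epsm > 0"
    and epss_lip: "\<exists>L. L-lipschitz_on (closure \<Omega>s) epss"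
    and epss_pos: "\<exists>c>0. \<forall>x\<in>closure \<Omega>s. epss x \<ge> c"
    and eps_def: "eps = (\<lambda>x. if x \<in> \<Omega>m then epsm else epss x)"
    and g\<Omega>_lip: "\<exists>L. L-lipschitz_on (frontier \<Omega>) g\<Omega>"
    and phys_pos: "e0 > 0" "kB > 0" "T > 0"
    and xs_in: "\<forall>i<Nm. xs i \<in> \<Omega>m"
    and M_pos: "\<forall>j<Nions. M j > 0"
    and \<xi>_nz: "\<forall>j<Nions. \<xi> j \<noteq> 0"
    and b_def: "b = bfun e0 kB T Nions M \<xi> \<Omega>ions"
    and B_def: "B = Bfun e0 kB T Nions M \<xi> \<Omega>ions"
    and G_def: "G = Gpot e0 kB T epsm Nm xs z"
    and DG: "\<forall>x\<in>\<Omega>s. (G has_derivative (\<lambda>h. DG x \<bullet> h)) (at x)"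
    and uH: "H1_grad \<Omega> uH DuH"
            "AE x in lebesgue. x \<in> \<Omega>s \<longrightarrow> uH x = - G x"
            "has_trace \<Omega>m uH (\<lambda>x. - G x)"
            "\<forall>v Dv. H10_grad \<Omega>m v Dv \<longrightarrow> (LINT x:\<Omega>m|lebesgue. DuH x \<bullet> Dv x) = 0"
    and splitting:
      "(w = G \<and> f = (\<lambda>x. (indicator \<Omega>s x * (epsm - epss x)) *\<^sub>R DG x)
              \<and> gbar = (\<lambda>x. g\<Omega> x - G x))
       \<or> (w = (\<lambda>x. 0)
              \<and> f = (\<lambda>x. (- (indicator \<Omega>m x * epsm)) *\<^sub>R DuH x + (indicator \<Omega>s x * epsm) *\<^sub>R DG x)
              \<and> gbar = g\<Omega>)"
    and u_min: "H1_grad \<Omega> u Du" "has_trace \<Omega> u gbar"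
               "\<forall>v Dv. H1_grad \<Omega> v Dv \<and> has_trace \<Omega> v gbar \<longrightarrow>
                   Jfun \<Omega> eps B w f u Du \<le> Jfun \<Omega> eps B w f v Dv"
  shows "(\<forall>v. test_fun \<Omega> v \<longrightarrow>
            set_integrable lebesgue \<Omega> (\<lambda>x. b x (u x + w x) * v x) \<and>
            (LINT x:\<Omega>|lebesgue. eps x * (Du x \<bullet> cgrad v x))
              + (LINT x:\<Omega>|lebesgue. b x (u x + w x) * v x)
              = (LINT x:\<Omega>|lebesgue. f x \<bullet> cgrad v x))
       \<and> (\<forall>v Dv. H10_grad \<Omega> v Dv \<and> Linf_on \<Omega> v \<longrightarrow>
            set_integrable lebesgue \<Omega> (\<lambda>x. b x (u x + w x) * v x) \<and>
            (LINT x:\<Omega>|lebesgue. eps x * (Du x \<bullet> Dv x))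
              + (LINT x:\<Omega>|lebesgue. b x (u x + w x) * v x)
              = (LINT x:\<Omega>|lebesgue. f x \<bullet> Dv x))"
proof -
  have o: "open \<Omega>" "bounded \<Omega>" using \<Omega> by auto
  have \<Omega>s_open: "open \<Omega>s" unfolding \<Omega>s_def using o(1) by (simp add: open_Diff)
  have \<Omega>s_sub: "\<Omega>s \<subseteq> \<Omega>" unfolding \<Omega>s_def by auto
  have \<Omega>m_sub: "\<Omega>m \<subseteq> \<Omega>" using \<Omega>m(2) closure_subset by blast
  have \<Omega>s_disj: "\<Omega>s \<inter> \<Omega>m = {}" unfolding \<Omega>s_def using closure_subset by blast
  have diff_sub: "\<Omega> - \<Omega>m \<subseteq> closure \<Omega>s"
  proof
    fix x assume x: "x \<in> \<Omega> - \<Omega>m"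
    show "x \<in> closure \<Omega>s"
    proof (cases "x \<in> closure \<Omega>m")
      case True
      then have "x \<in> frontier \<Omega>m" using x \<Omega>m(1) unfolding frontier_def by (simp add: interior_open)
      then show ?thesis using frontier_sub[OF \<Omega>m(1) \<Omega>m(3) \<Omega>m(2) o(1)] unfolding \<Omega>s_def by blast
    next
      case False
      then have "x \<in> \<Omega>s" using x unfolding \<Omega>s_def by simp
      then show ?thesis using closure_subset by blast
    qed
  qed
  have bcl: "bounded (closure \<Omega>s)" using o(2) \<Omega>s_sub by (meson bounded_closure bounded_subset)
  have ccl: "compact (closure \<Omega>s)" using bcl by (simp add: compact_eq_bounded_closed)
  have cclO: "compact (closure \<Omega>)" using bounded_closure[OF o(2)] by (simp add: compact_eq_bounded_closed)
  obtain L where "L-lipschitz_on (closure \<Omega>s) epss" using epss_lip by blast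
  then have epss_c: "continuous_on (closure \<Omega>s) epss" by (rule lipschitz_on_continuous_on)
  obtain Eb where Eb: "\<forall>x\<in>closure \<Omega>s. norm (epss x) \<le> Eb" using compact_bound[OF ccl epss_c] by blast
  define EB where "EB = \<bar>epsm\<bar> + \<bar>Eb\<bar>"
  have epsb: "\<bar>eps x\<bar> \<le> EB" if "x \<in> \<Omega>" for x
  proof (cases "x \<in> \<Omega>m")
    case True then show ?thesis unfolding eps_def EB_def by simp
  next
    case False
    then have "x \<in> closure \<Omega>s" using diff_sub that by blast
    then show ?thesis using Eb False unfolding eps_def EB_def by force
  qed
  have epsm: "(\<lambda>x. indicator \<Omega> x * eps x) \<in> borel_measurable lebesgue"
  proof -
    have e: "(\<lambda>x. indicator \<Omega> x * eps x) = (\<lambda>x. indicator \<Omega>m x * epsm + indicator (\<Omega> - \<Omega>m) x *\<^sub>R epss x)"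
      using \<Omega>m_sub unfolding eps_def by (intro ext) (auto simp: indicator_def)
    have "\<Omega> - \<Omega>m \<in> sets borel" using o(1) \<Omega>m(1) by (intro sets.Diff borel_open)
    then have m2: "(\<lambda>x. indicator (\<Omega> - \<Omega>m) x *\<^sub>R epss x) \<in> borel_measurable lebesgue"
      using continuous_on_subset[OF epss_c diff_sub] by (rule cont_ind_meas)
    have "\<Omega>m \<in> sets lebesgue" using \<Omega>m(1) by (rule open_leb)
    then show ?thesis unfolding e using m2 by measurable
  qed
  have xs_out: "xs i \<notin> closure \<Omega>s" if i: "i < Nm" for i
  proof -
    obtain r where r: "r > 0" "ball (xs i) r \<subseteq> \<Omega>m" using xs_in i \<Omega>m(1) open_contains_ball by blast
    then have "ball (xs i) r \<inter> \<Omega>s = {}" using \<Omega>s_disj by blast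
    then have "ball (xs i) r \<inter> closure \<Omega>s = {}" using open_Int_closure_eq_empty[of "ball (xs i) r" \<Omega>s] by simp
    moreover have "xs i \<in> ball (xs i) r" using r by simp
    ultimately show ?thesis by blast
  qed
  have "\<exists>K \<phi> \<phi>'. G = (\<lambda>x. K * (\<Sum>i<Nm. z i * \<phi> (norm (x - xs i)))) \<and>
      (\<forall>r>0. (\<phi> has_real_derivative \<phi>' r) (at r)) \<and> continuous_on {0<..} \<phi>'"
  proof (cases "DIM('a) = 2")
    case True
    show ?thesis
    proof (intro exI conjI)
      show "G = (\<lambda>x. (- 2 * e0\<^sup>2 / (epsm * kB * T)) * (\<Sum>i<Nm. z i * ln (norm (x - xs i))))"
        unfolding G_def Gpot_def[abs_def] using True by simp
      show "\<forall>r>0. (ln has_real_derivative inverse r) (at r)" by (auto intro: DERIV_ln)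
      show "continuous_on {0<..} (inverse :: real \<Rightarrow> real)" by (intro continuous_intros) auto
    qed
  next
    case False
    show ?thesis
    proof (intro exI conjI)
      show "G = (\<lambda>x. (e0\<^sup>2 / (epsm * kB * T)) * (\<Sum>i<Nm. z i * inverse (norm (x - xs i))))"
        unfolding G_def Gpot_def[abs_def] using False by (simp add: divide_inverse)
      show "\<forall>r>0. ((inverse :: real \<Rightarrow> real) has_real_derivative (- (inverse r ^ Suc (Suc 0)))) (at r)"
      proof (intro allI impI)
        fix r :: real assume "0 < r"
        then show "((inverse :: real \<Rightarrow> real) has_real_derivative (- (inverse r ^ Suc (Suc 0)))) (at r)"
          using DERIV_inverse[of r UNIV] by simp
      qed
      show "continuous_on {0<..} (\<lambda>r::real. - (inverse r ^ Suc (Suc 0)))" by (intro continuous_intros) auto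
    qed
  qed
  then obtain K \<phi> \<phi>' where Gf: "G = (\<lambda>x. K * (\<Sum>i<Nm. z i * \<phi> (norm (x - xs i))))"
    and \<phi>d: "\<And>r. r > 0 \<Longrightarrow> (\<phi> has_real_derivative \<phi>' r) (at r)" and \<phi>c: "continuous_on {0<..} \<phi>'" by blast
  define Ggrad where "Ggrad x = K *\<^sub>R (\<Sum>i<Nm. (z i * \<phi>' (norm (x - xs i)) / norm (x - xs i)) *\<^sub>R (x - xs i))" for x
  have Gder: "(G has_derivative (\<lambda>h. Ggrad x \<bullet> h)) (at x)" if x: "x \<in> closure \<Omega>s" for x
    unfolding Gf Ggrad_def by (rule radial_deriv[OF _ \<phi>d]) (use xs_out x in auto)
  have Gc: "continuous_on (closure \<Omega>s) G"
    using Gder by (meson continuous_at_imp_continuous_on has_derivative_continuous)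
  have Ggc: "continuous_on (closure \<Omega>s) Ggrad"
  proof -
    have nz: "x - xs i \<noteq> 0" if "x \<in> closure \<Omega>s" "i < Nm" for x i using xs_out that by auto
    have pc: "continuous_on (closure \<Omega>s) (\<lambda>x. \<phi>' (norm (x - xs i)))" if i: "i < Nm" for i
      by (rule continuous_on_compose2[OF \<phi>c]) (use nz i in \<open>auto intro!: continuous_intros\<close>)
    show ?thesis unfolding Ggrad_def[abs_def]
      by (intro continuous_intros pc) (use nz in auto)
  qed
  obtain Gb where Gb: "\<forall>x\<in>closure \<Omega>s. norm (G x) \<le> Gb" using compact_bound[OF ccl Gc] by blast
  obtain Db where Db: "\<forall>x\<in>closure \<Omega>s. norm (Ggrad x) \<le> Db" using compact_bound[OF ccl Ggc] by blast
  have DG_eq: "DG x = Ggrad x" if x: "x \<in> \<Omega>s" for x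
  proof -
    have "(\<lambda>h. DG x \<bullet> h) = (\<lambda>h. Ggrad x \<bullet> h)"
      using has_derivative_unique[OF DG[rule_format, OF x] Gder] x closure_subset by blast
    then have "DG x \<bullet> (DG x - Ggrad x) = Ggrad x \<bullet> (DG x - Ggrad x)" by metis
    then have "(DG x - Ggrad x) \<bullet> (DG x - Ggrad x) = 0" by (simp add: inner_diff_left)
    then show ?thesis by simp
  qed
  have fpiece: "L2v_on \<Omega> (\<lambda>x. (indicator \<Omega>s x * a x) *\<^sub>R DG x)"
    if ac: "continuous_on \<Omega>s a" and ab: "\<And>x. x \<in> \<Omega>s \<Longrightarrow> \<bar>a x\<bar> \<le> Ab" for a Ab
  proof -
    have e: "(\<lambda>x. (indicator \<Omega>s x * a x) *\<^sub>R DG x) = (\<lambda>x. indicator \<Omega>s x *\<^sub>R (a x *\<^sub>R Ggrad x))"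
      using DG_eq by (intro ext) (auto simp: indicator_def)
    have "continuous_on \<Omega>s (\<lambda>x. a x *\<^sub>R Ggrad x)"
      using ac continuous_on_subset[OF Ggc closure_subset] by (intro continuous_intros)
    then have m: "(\<lambda>x. (indicator \<Omega>s x * a x) *\<^sub>R DG x) \<in> borel_measurable lebesgue"
      unfolding e using \<Omega>s_open by (intro cont_ind_meas) (auto simp: borel_open)
    show ?thesis
    proof (rule L2v_bdd[OF o m])
      fix x assume "x \<in> \<Omega>"
      show "norm ((indicator \<Omega>s x * a x) *\<^sub>R DG x) \<le> \<bar>Ab\<bar> * \<bar>Db\<bar>"
      proof (cases "x \<in> \<Omega>s")
        case True
        then have "norm (Ggrad x) \<le> Db" using Db closure_subset by blast
        moreover have "\<bar>a x\<bar> \<le> Ab" using ab[OF True] .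
        ultimately show ?thesis using True DG_eq[OF True]
          by (simp add: mult_mono')
      qed simp
    qed
  qed
  have fL2: "L2v_on \<Omega> f"
    using splitting
  proof
    assume s2: "w = G \<and> f = (\<lambda>x. (indicator \<Omega>s x * (epsm - epss x)) *\<^sub>R DG x) \<and> gbar = (\<lambda>x. g\<Omega> x - G x)"
    have "L2v_on \<Omega> (\<lambda>x. (indicator \<Omega>s x * (epsm - epss x)) *\<^sub>R DG x)"
    proof (rule fpiece)
      show "continuous_on \<Omega>s (\<lambda>x. epsm - epss x)"
        using continuous_on_subset[OF epss_c closure_subset] by (intro continuous_intros)
      show "\<bar>epsm - epss x\<bar> \<le> \<bar>epsm\<bar> + \<bar>Eb\<bar>" if "x \<in> \<Omega>s" for x
        using Eb closure_subset that by force
    qed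
    then show ?thesis using s2 by simp
  next
    assume s3: "w = (\<lambda>x. 0) \<and> f = (\<lambda>x. (- (indicator \<Omega>m x * epsm)) *\<^sub>R DuH x + (indicator \<Omega>s x * epsm) *\<^sub>R DG x) \<and> gbar = g\<Omega>"
    have p1: "L2v_on \<Omega> (\<lambda>x. (- (indicator \<Omega>m x * epsm)) *\<^sub>R DuH x)"
    proof (rule L2v_scale[OF o(1)])
      show "L2v_on \<Omega> DuH" using uH(1) unfolding H1_grad_def by simp
      have "\<Omega>m \<in> sets lebesgue" using \<Omega>m(1) by (rule open_leb)
      then show "(\<lambda>x. - (indicator \<Omega>m x * epsm)) \<in> borel_measurable lebesgue" by measurable
      show "\<bar>- (indicator \<Omega>m x * epsm)\<bar> \<le> \<bar>epsm\<bar>" for x by (simp add: indicator_def)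
    qed
    have p2: "L2v_on \<Omega> (\<lambda>x. (indicator \<Omega>s x * epsm) *\<^sub>R DG x)"
      by (rule fpiece[where Ab = "\<bar>epsm\<bar>"]) auto
    have "L2v_on \<Omega> (\<lambda>x. (- (indicator \<Omega>m x * epsm)) *\<^sub>R DuH x + 1 *\<^sub>R ((indicator \<Omega>s x * epsm) *\<^sub>R DG x))"
      by (rule L2v_lin[OF o(1) p1 p2])
    then show ?thesis using s3 by simp
  qed
  have "continuous_on \<Omega>ions w \<and> (\<exists>Wb. \<forall>x\<in>\<Omega>ions. \<bar>w x\<bar> \<le> Wb)"
    using splitting
  proof
    assume "w = G \<and> f = (\<lambda>x. (indicator \<Omega>s x * (epsm - epss x)) *\<^sub>R DG x) \<and> gbar = (\<lambda>x. g\<Omega> x - G x)"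
    then have wG: "w = G" by simp
    have sub: "\<Omega>ions \<subseteq> closure \<Omega>s" using \<Omega>ions(2) closure_subset by blast
    show ?thesis unfolding wG using continuous_on_subset[OF Gc sub] Gb sub by force
  next
    assume "w = (\<lambda>x. 0) \<and> f = (\<lambda>x. (- (indicator \<Omega>m x * epsm)) *\<^sub>R DuH x + (indicator \<Omega>s x * epsm) *\<^sub>R DG x) \<and> gbar = g\<Omega>"
    then have "w = (\<lambda>x. 0)" by simp
    then show ?thesis by auto
  qed
  then obtain Wb where wc: "continuous_on \<Omega>ions w" and wb: "\<And>x. x \<in> \<Omega>ions \<Longrightarrow> \<bar>w x\<bar> \<le> Wb" by blast
  have Ib: "\<Omega>ions \<in> sets borel" using \<Omega>ions(1) by (simp add: borel_open)
  have wm: "(\<lambda>x. indicator \<Omega>ions x * exp (- \<xi> j * w x)) \<in> borel_measurable lebesgue" for j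
  proof -
    have "continuous_on \<Omega>ions (\<lambda>x. exp (- \<xi> j * w x))" using wc by (intro continuous_intros)
    from cont_ind_meas[OF Ib this] show ?thesis by simp
  qed
  define cc where "cc j = 4 * pi * e0\<^sup>2 / (kB * T) * \<bar>M j\<bar>" for j
  have cc: "0 \<le> cc j" for j unfolding cc_def using phys_pos by simp
  have Bform: "B = (\<lambda>x t. \<Sum>j<Nions. cc j * indicator \<Omega>ions x * exp (- \<xi> j * t))"
  proof (intro ext)
    fix x t
    show "B x t = (\<Sum>j<Nions. cc j * indicator \<Omega>ions x * exp (- \<xi> j * t))"
      unfolding B_def Bfun_def cc_def sum_distrib_left
      by (intro sum.cong refl) (use M_pos in \<open>auto simp: abs_of_pos\<close>)
  qed
  have bform: "b = (\<lambda>x t. - (\<Sum>j<Nions. \<xi> j * (cc j * indicator \<Omega>ions x * exp (- \<xi> j * t))))"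
  proof (intro ext)
    fix x t
    have "b x t = - (4 * pi * e0\<^sup>2 / (kB * T) * (\<Sum>j<Nions. M j * indicator \<Omega>ions x * \<xi> j * exp (- \<xi> j * t)))"
      unfolding b_def bfun_def by simp
    also have "\<dots> = - (\<Sum>j<Nions. \<xi> j * (cc j * indicator \<Omega>ions x * exp (- \<xi> j * t)))"
      unfolding cc_def sum_distrib_left
      by (intro arg_cong[where f=uminus] sum.cong refl) (use M_pos in \<open>auto simp: abs_of_pos\<close>)
    finally show "b x t = - (\<Sum>j<Nions. \<xi> j * (cc j * indicator \<Omega>ions x * exp (- \<xi> j * t)))" .
  qed
  have Bint: "set_integrable lebesgue \<Omega> (\<lambda>x. B x (u x + w x))"
  proof (rule ccontr)
    assume nB: "\<not> ?thesis"
    obtain h where h: "H1 \<Omega> h" "continuous_on (closure \<Omega>) h" "\<forall>x\<in>frontier \<Omega>. h x = gbar x"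
      "H10 \<Omega> (\<lambda>x. u x - h x)" using u_min(2) unfolding has_trace_def by blast
    obtain Dh where Dh: "H1_grad \<Omega> h Dh" using h(1) unfolding H1_def by blast
    have "H10 \<Omega> (\<lambda>x. h x - h x)" using H10_zero unfolding H10_def by auto
    then have htr: "has_trace \<Omega> h gbar" unfolding has_trace_def using h by blast
    obtain Hb where Hb: "\<forall>x\<in>closure \<Omega>. norm (h x) \<le> Hb" using compact_bound[OF cclO h(2)] by blast
    have sub: "\<Omega>ions \<subseteq> closure \<Omega>" using \<Omega>ions(2) \<Omega>s_sub closure_subset by blast
    have "set_integrable lebesgue \<Omega> (\<lambda>x. \<Sum>j<Nions. cc j * indicator \<Omega>ions x * exp (- \<xi> j * (h x + w x)))"
    proof (rule B_int_cont[OF o \<Omega>ions(1)])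
      show "continuous_on \<Omega>ions (\<lambda>x. h x + w x)"
        using continuous_on_subset[OF h(2) sub] wc by (intro continuous_intros)
      show "\<bar>h x + w x\<bar> \<le> Hb + Wb" if "x \<in> \<Omega>ions" for x
        using Hb sub that wb[OF that] by force
    qed
    then have "Jfun \<Omega> eps B w f h Dh \<noteq> \<infinity>" unfolding Jfun_def Bform by simp
    moreover have "Jfun \<Omega> eps B w f u Du = \<infinity>" using nB unfolding Jfun_def by simp
    moreover have "Jfun \<Omega> eps B w f u Du \<le> Jfun \<Omega> eps B w f h Dh" using u_min(3) Dh htr by blast
    ultimately show False by simp
  qed
  have EL: "set_integrable lebesgue \<Omega> (\<lambda>x. b x (u x + w x) * v x) \<and>
            (LINT x:\<Omega>|lebesgue. eps x * (Du x \<bullet> Dv x))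
              + (LINT x:\<Omega>|lebesgue. b x (u x + w x) * v x)
              = (LINT x:\<Omega>|lebesgue. f x \<bullet> Dv x)"
    if v: "H10_grad \<Omega> v Dv" "Linf_on \<Omega> v" for v Dv
  proof -
    have vH: "H1_grad \<Omega> v Dv" using v(1) unfolding H10_grad_def by simp
    obtain C where vb: "AE x in lebesgue. x \<in> \<Omega> \<longrightarrow> \<bar>v x\<bar> \<le> C" using v(2) unfolding Linf_on_def by blast
    have min: "Jfun \<Omega> eps B w f u Du \<le> Jfun \<Omega> eps B w f (\<lambda>x. u x + t * v x) (\<lambda>x. Du x + t *\<^sub>R Dv x)" for t
      using u_min(3) H1_lin[OF o u_min(1) vH, of t] has_trace_lin[OF o u_min(2) u_min(1) v(1), of t] by blast
    show ?thesis
      by (rule EL_abstract[OF o Bform bform cc _ wm epsm epsb fL2 u_min(1) vH vb Bint min]) simp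
  qed
  show ?thesis
  proof (rule conjI; intro allI impI)
    fix v assume "test_fun \<Omega> v"
    from EL[OF test_H10[OF this]]
    show "set_integrable lebesgue \<Omega> (\<lambda>x. b x (u x + w x) * v x) \<and>
            (LINT x:\<Omega>|lebesgue. eps x * (Du x \<bullet> cgrad v x))
              + (LINT x:\<Omega>|lebesgue. b x (u x + w x) * v x)
              = (LINT x:\<Omega>|lebesgue. f x \<bullet> cgrad v x)" .
  next
    fix v Dv assume "H10_grad \<Omega> v Dv \<and> Linf_on \<Omega> v"
    then show "set_integrable lebesgue \<Omega> (\<lambda>x. b x (u x + w x) * v x) \<and>
            (LINT x:\<Omega>|lebesgue. eps x * (Du x \<bullet> Dv x))
              + (LINT x:\<Omega>|lebesgue. b x (u x + w x) * v x)
              = (LINT x:\<Omega>|lebesgue. f x \<bullet> Dv x)" using EL by blast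
  qed
qed


end
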